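(* Let $r\ge1$ and let $\mathcal{R}\subseteq\mathcal{A}_e$ be an $r$-Rouquier block. Then $\Phi_r(\mathcal{R})\subseteq\mathcal{A}_e^r$ is a disjoint union of Rouquier blocks of $\mathcal{A}_e^r$.
   Context: Fix an integer $e\ge 2$. A partition is a weakly decreasing sequence $\lambda=(\lambda_1,\lambda_2,\dots)$ of non-negative integers with finite sum $|\lambda|$; $\Lambda$ denotes the set of partitions and $\Lambda^{(m)}$ the set of $m$-multipartitions, i.e. $m$-tuples $\boldsymbol\lambda=(\lambda^{(1)},\dots,\lambda^{(m)})$ of partitions, with $|\boldsymbol\lambda|=\sum_k|\lambda^{(k)}|$. A $\beta$-set is a subset $B\subseteq\mathbb{Z}$ containing all sufficiently small integers and no sufficiently large ones. For $\lambda\in\Lambda$ and $s\in\mathbb{Z}$ set $B_s(\lambda)=\{\lambda_i-i+s : i\ge 1\}$; every $\beta$-set equals $B_s(\lambda)$ for a unique pair $(\lambda,s)$. Let $\mathcal{A}_e=\Lambda\times\mathbb{Z}$ (abacus configurations with $e$ runners) and $\mathcal{A}_e^m=\Lambda^{(m)}\times\mathbb{Z}^m$, where $(\boldsymbol\lambda,\mathbf{s})$ is identified with the $m$-tuple of $\beta$-sets $(B_{s_1}(\lambda^{(1)}),\dots,B_{s_m}(\lambda^{(m)}))$. Blocks: for $(\boldsymbol\lambda,\mathbf{s})\in\mathcal{A}_e^m$, its $e$-residue multiset is the multiset of the values $s_k+y-x \bmod e$ over all nodes $(x,y,k)$ with $x\ge1$, $1\le y\le\lambda^{(k)}_x$,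 $1\le k\le m$. Define $(\boldsymbol\lambda,\mathbf{s})\approx_e(\boldsymbol\mu,\mathbf{s}')$ iff $\mathbf{s}=\mathbf{s}'$, $|\boldsymbol\lambda|=|\boldsymbol\mu|$ and the $e$-residue multisets coincide. Its equivalence classes are called blocks. The map $\eta$: for $(\lambda,s)\in\mathcal{A}_e$ with $B=B_s(\lambda)$ and $0\le i<e$, the set $C_i=\{(b-i)/e : b\in B,\ b\equiv i \bmod e\}$ is a $\beta$-set, so $C_i=B_{t_i}(\rho_i)$ for a unique $(\rho_i,t_i)\in\Lambda\times\mathbb{Z}$; set $\eta(\lambda,s)=((\rho_0,\dots,\rho_{e-1}),(t_0,\dots,t_{e-1}))$. The $e$-weight of $\lambda$ is $\mathrm{wt}(\lambda)=\sum_i|\rho_i|$. Rouquier: $(\lambda,s)\in\mathcal{A}_e$ with $\eta(\lambda,s)=(\boldsymbol\rho,\mathbf{t})$ is a Rouquier partition if $\mathrm{wt}(\lambda)\le t_{i+1}-t_i+1$ for all $0\le i<e-1$, and an $r$-Rouquier partition if $\mathrm{wt}(\lambda)\le t_{i+1}-t_i+r$ for all $0\le i<e-1$. $(\boldsymbol\lambda,\mathbf{s})\in\mathcal{A}_e^r$ is a Rouquier multipartition if $(\lambda^{(k)},s_k)$ is a Rouquier partition for every $1\le k\le r$. A block of $\mathcal{A}_e^r$ is a Rouquier block if all its elements are Rouquier multipartitions; a block of $\mathcal{A}_e$ is an $r$-Rouquier block if all its elements are $r$-Rouquier partitions. Uglov's map: for $1\le k\le r$ define $\psi_k:\mathbb{Z}\to\mathbb{Z}$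 by $\psi_k(ae+i)=((a+1)r-k)e+i$ for $a\in\mathbb{Z}$, $0\le i<e$. For $(\boldsymbol\lambda,\mathbf{s})\in\mathcal{A}_e^r$ the set $B=\bigsqcup_{k=1}^r\psi_k(B_{s_k}(\lambda^{(k)}))$ is a $\beta$-set, and $\Psi_r(\boldsymbol\lambda,\mathbf{s})$ is the unique $(\tilde\lambda,\tilde s)\in\mathcal{A}_e$ with $B_{\tilde s}(\tilde\lambda)=B$. $\Psi_r:\mathcal{A}_e^r\to\mathcal{A}_e$ is a bijection; $\Phi_r=\Psi_r^{-1}$. *)

theory Defs
  imports Main "HOL-Library.Multiset"
begin

definition is_partition :: "nat list \<Rightarrow> bool" where
  "is_partition la \<longleftrightarrow> sorted_wrt (\<ge>) la \<and> 0 \<notin> set la"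

definition part :: "nat list \<Rightarrow> nat \<Rightarrow> nat" where
  "part la i = (if 1 \<le> i \<and> i \<le> length la then la ! (i - 1) else 0)"

definition beta_set :: "int \<Rightarrow> nat list \<Rightarrow> int set" where
  "beta_set s la = {int (part la i) - int i + s | i. 1 \<le> i}"

text \<open>The set A_e = Lambda x Z of abacus configurations (pairs (lambda, s)).\<close>
definition abacus :: "(nat list \<times> int) set" where
  "abacus = {x. is_partition (fst x)}"

text \<open>A_e^m: m-tuples (lists of length m) of pairs (lambda^(k), s_k).\<close>
definition abacus_multi :: "nat \<Rightarrow> (nat list \<times> int) list set" where
  "abacus_multi m = {c. length c = m \<and> (\<forall>x\<in>set c. is_partition (fst x))}"

definition beta_inv :: "int set \<Rightarrow> nat list \<times> int" where
  "beta_inv B = (THE x. x \<in> abacus \<and> beta_set (snd x) (fst x) = B)"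

definition nodes :: "nat list \<Rightarrow> (nat \<times> nat) set" where
  "nodes la = {(x, y). 1 \<le> x \<and> 1 \<le> y \<and> y \<le> part la x}"

definition res1 :: "nat \<Rightarrow> nat list \<times> int \<Rightarrow> int multiset" where
  "res1 e x = image_mset (\<lambda>(a, b). (snd x + int b - int a) mod int e) (mset_set (nodes (fst x)))"

definition resm :: "nat \<Rightarrow> (nat list \<times> int) list \<Rightarrow> int multiset" where
  "resm e c = (\<Sum>k<length c. res1 e (c ! k))"

definition sizem :: "(nat list \<times> int) list \<Rightarrow> nat" where
  "sizem c = (\<Sum>k<length c. sum_list (fst (c ! k)))"

definition same_block :: "nat \<Rightarrow> (nat list \<times> int) list \<Rightarrow> (nat list \<times> int) list \<Rightarrow> bool" where
  "same_block e c d \<longleftrightarrow> map snd c = map snd d \<and> sizem c = sizem d \<and> resm e c = resm e d"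

definition blocks_multi :: "nat \<Rightarrow> nat \<Rightarrow> (nat list \<times> int) list set set" where
  "blocks_multi e m = {{d \<in> abacus_multi m. same_block e c d} | c. c \<in> abacus_multi m}"

definition same_block1 :: "nat \<Rightarrow> nat list \<times> int \<Rightarrow> nat list \<times> int \<Rightarrow> bool" where
  "same_block1 e x y \<longleftrightarrow> snd x = snd y \<and> sum_list (fst x) = sum_list (fst y) \<and> res1 e x = res1 e y"

definition blocks1 :: "nat \<Rightarrow> (nat list \<times> int) set set" where
  "blocks1 e = {{y \<in> abacus. same_block1 e x y} | x. x \<in> abacus}"

definition quot_beta :: "nat \<Rightarrow> int set \<Rightarrow> nat \<Rightarrow> int set" where
  "quot_beta e B i = {(b - int i) div int e | b. b \<in> B \<and> b mod int e = int i}"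

text \<open>eta(lambda, s) = ((rho_0,...,rho_{e-1}), (t_0,...,t_{e-1})), as a function of i < e.\<close>
definition eta :: "nat \<Rightarrow> nat list \<times> int \<Rightarrow> nat \<Rightarrow> nat list \<times> int" where
  "eta e x i = beta_inv (quot_beta e (beta_set (snd x) (fst x)) i)"

definition weight :: "nat \<Rightarrow> nat list \<times> int \<Rightarrow> nat" where
  "weight e x = (\<Sum>i<e. sum_list (fst (eta e x i)))"

definition r_rouquier :: "nat \<Rightarrow> nat \<Rightarrow> nat list \<times> int \<Rightarrow> bool" where
  "r_rouquier e r x \<longleftrightarrow>
     (\<forall>i. i + 1 < e \<longrightarrow> int (weight e x) \<le> snd (eta e x (Suc i)) - snd (eta e x i) + int r)"

definition rouquier :: "nat \<Rightarrow> nat list \<times> int \<Rightarrow> bool" where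
  "rouquier e x \<longleftrightarrow> (\<forall>i. i + 1 < e \<longrightarrow> int (weight e x) \<le> snd (eta e x (Suc i)) - snd (eta e x i) + 1)"

definition rouquier_multi :: "nat \<Rightarrow> (nat list \<times> int) list \<Rightarrow> bool" where
  "rouquier_multi e c \<longleftrightarrow> (\<forall>k<length c. rouquier e (c ! k))"

definition rouquier_block :: "nat \<Rightarrow> nat \<Rightarrow> (nat list \<times> int) list set \<Rightarrow> bool" where
  "rouquier_block e r Bl \<longleftrightarrow> Bl \<in> blocks_multi e r \<and> (\<forall>c\<in>Bl. rouquier_multi e c)"

definition r_rouquier_block :: "nat \<Rightarrow> nat \<Rightarrow> (nat list \<times> int) set \<Rightarrow> bool" where
  "r_rouquier_block e r Bl \<longleftrightarrow> Bl \<in> blocks1 e \<and> (\<forall>x\<in>Bl. r_rouquier e r x)"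

definition psi :: "nat \<Rightarrow> nat \<Rightarrow> nat \<Rightarrow> int \<Rightarrow> int" where
  "psi e r k b = ((b div int e + 1) * int r - int k) * int e + b mod int e"

text \<open>Component j of the list (0-based) is the k = j+1 component.\<close>
definition Psi :: "nat \<Rightarrow> nat \<Rightarrow> (nat list \<times> int) list \<Rightarrow> nat list \<times> int" where
  "Psi e r c = beta_inv (\<Union>j<length c. psi e r (Suc j) ` beta_set (snd (c ! j)) (fst (c ! j)))"

definition Phi :: "nat \<Rightarrow> nat \<Rightarrow> nat list \<times> int \<Rightarrow> (nat list \<times> int) list" where
  "Phi e r = inv_into (abacus_multi r) (Psi e r)"

end

theory Submission
  imports Defs
begin

definition Diff :: "(int \<Rightarrow> int) \<Rightarrow> int set \<Rightarrow> int set \<Rightarrow> int" where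
  "Diff G X Y = sum G (X - Y) - sum G (Y - X)"

definition fd :: "int set \<Rightarrow> int set \<Rightarrow> bool" where
  "fd X Y \<longleftrightarrow> finite (X - Y) \<and> finite (Y - X)"

lemma fd_sym: "fd X Y \<Longrightarrow> fd Y X" by (auto simp: fd_def)
lemma fd_refl: "fd X X" by (auto simp: fd_def)
lemma fd_trans: "fd X Y \<Longrightarrow> fd Y Z \<Longrightarrow> fd X Z"
proof -
  assume a: "fd X Y" "fd Y Z"
  have "X - Z \<subseteq> (X - Y) \<union> (Y - Z)" "Z - X \<subseteq> (Z - Y) \<union> (Y - X)" by auto
  thus ?thesis using a unfolding fd_def by (meson finite_Un finite_subset)
qed

lemma Diff_window:
  assumes "finite W" "X - Y \<subseteq> W" "Y - X \<subseteq> W"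
  shows "Diff G X Y = sum G (X \<inter> W) - sum G (Y \<inter> W)"
proof -
  have f: "finite (X \<inter> Y \<inter> W)" using assms by auto
  have fx: "finite (X - Y)" "finite (Y - X)" using assms finite_subset by auto
  have "X \<inter> W = (X - Y) \<union> (X \<inter> Y \<inter> W)" using assms by auto
  hence 1: "sum G (X \<inter> W) = sum G (X - Y) + sum G (X \<inter> Y \<inter> W)"
    using f fx by (simp add: sum.union_disjoint Int_Diff_disjoint inf_commute inf_left_commute)
  have "Y \<inter> W = (Y - X) \<union> (X \<inter> Y \<inter> W)" using assms by auto
  hence 2: "sum G (Y \<inter> W) = sum G (Y - X) + sum G (X \<inter> Y \<inter> W)"
    using f fx by (subst sum.union_disjoint[symmetric]) auto
  show ?thesis using 1 2 by (simp add: Diff_def)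
qed

lemma Diff_trans:
  assumes "fd X Y" "fd Y Z"
  shows "Diff G X Z = Diff G X Y + Diff G Y Z"
proof -
  define W where "W = (X - Y) \<union> (Y - X) \<union> (Y - Z) \<union> (Z - Y)"
  have fw: "finite W" using assms by (auto simp: W_def fd_def)
  show ?thesis
    apply (subst Diff_window[OF fw], (auto simp: W_def)[2])+
    by simp
qed

lemma Diff_swap: "Diff G Y X = - Diff G X Y" by (simp add: Diff_def)

lemma Diff_fin: "finite P \<Longrightarrow> finite Q \<Longrightarrow> Diff G P Q = sum G P - sum G Q"
  by (subst Diff_window[where W="P \<union> Q"]) (auto simp: Int_absorb2)

lemma Diff_add: "Diff (\<lambda>x. G x + H x) X Y = Diff G X Y + Diff H X Y"
  by (simp add: Diff_def sum.distrib)
lemma Diff_mult: "Diff (\<lambda>x. c * G x) X Y = c * Diff G X Y"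
  by (simp add: Diff_def sum_distrib_left algebra_simps)
lemma Diff_const: "Diff (\<lambda>x. c) X Y = c * Diff (\<lambda>x. 1) X Y"
  using Diff_mult[of c "\<lambda>x. 1"] by simp

lemma Diff_image:
  assumes "inj f"
  shows "Diff G (f ` X) (f ` Y) = Diff (G \<circ> f) X Y"
proof -
  have "f ` X - f ` Y = f ` (X - Y)" "f ` Y - f ` X = f ` (Y - X)" using assms
    by (auto simp: inj_def)
  thus ?thesis using assms by (simp add: Diff_def sum.reindex inj_on_def)
qed

lemma fd_image: "inj f \<Longrightarrow> fd X Y \<Longrightarrow> fd (f ` X) (f ` Y)"
  unfolding fd_def by (metis image_set_diff finite_imageI)

lemma UN_diff_disj:
  assumes "\<forall>j\<in>J. inj (f j)"
    and "\<forall>j\<in>J. \<forall>j'\<in>J. j \<noteq> j' \<longrightarrow> range (f j) \<inter> range (f j') = {}"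
  shows "(\<Union>j\<in>J. f j ` A j) - (\<Union>j\<in>J. f j ` A' j) = (\<Union>j\<in>J. f j ` (A j - A' j))" (is "?L = ?R")
proof
  show "?L \<subseteq> ?R"
  proof
    fix x assume "x \<in> ?L"
    then obtain j a where j: "j \<in> J" "a \<in> A j" "x = f j a" and nx: "x \<notin> (\<Union>j\<in>J. f j ` A' j)" by auto
    have "a \<notin> A' j" using j nx by auto
    thus "x \<in> ?R" using j by auto
  qed
  show "?R \<subseteq> ?L"
  proof
    fix x assume "x \<in> ?R"
    then obtain j a where j: "j \<in> J" "a \<in> A j" "a \<notin> A' j" "x = f j a" by auto
    have "x \<notin> f j' ` A' j'" if "j' \<in> J" for j'
    proof
      assume "x \<in> f j' ` A' j'"
      then obtain b where b: "b \<in> A' j'" "x = f j' b" by auto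
      have "j' = j" using assms(2) j that b by blast
      thus False using b j assms(1) by (auto simp: inj_def)
    qed
    thus "x \<in> ?L" using j by auto
  qed
qed

lemma Diff_UN:
  assumes J: "finite J" and inj: "\<forall>j\<in>J. inj (f j)"
    and disj: "\<forall>j\<in>J. \<forall>j'\<in>J. j \<noteq> j' \<longrightarrow> range (f j) \<inter> range (f j') = {}"
    and fdA: "\<forall>j\<in>J. fd (A j) (A' j)"
  shows "Diff G (\<Union>j\<in>J. f j ` A j) (\<Union>j\<in>J. f j ` A' j) = (\<Sum>j\<in>J. Diff (G \<circ> f j) (A j) (A' j))"
    and "fd (\<Union>j\<in>J. f j ` A j) (\<Union>j\<in>J. f j ` A' j)"
proof -
  have e1: "(\<Union>j\<in>J. f j ` A j) - (\<Union>j\<in>J. f j ` A' j) = (\<Union>j\<in>J. f j ` (A j - A' j))"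
    by (rule UN_diff_disj[OF inj disj])
  have e2: "(\<Union>j\<in>J. f j ` A' j) - (\<Union>j\<in>J. f j ` A j) = (\<Union>j\<in>J. f j ` (A' j - A j))"
    by (rule UN_diff_disj[OF inj disj])
  have fin1: "\<forall>j\<in>J. finite (f j ` (A j - A' j))" "\<forall>j\<in>J. finite (f j ` (A' j - A j))"
    using fdA by (auto simp: fd_def)
  have dj0: "f j ` X \<inter> f j' ` Y = {}" if "j\<in>J" "j'\<in>J" "j\<noteq>j'" for j j' X Y
  proof -
    have "range (f j) \<inter> range (f j') = {}" using disj that by blast
    thus ?thesis by blast
  qed
  have dj: "\<forall>j\<in>J. \<forall>j'\<in>J. j \<noteq> j' \<longrightarrow> f j ` X j \<inter> f j' ` Y j' = {}" for X Y
    using dj0 by blast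
  have s1: "sum G (\<Union>j\<in>J. f j ` (A j - A' j)) = (\<Sum>j\<in>J. sum G (f j ` (A j - A' j)))"
    by (rule sum.UNION_disjoint[OF J fin1(1)]) (use dj in simp)
  have s2: "sum G (\<Union>j\<in>J. f j ` (A' j - A j)) = (\<Sum>j\<in>J. sum G (f j ` (A' j - A j)))"
    by (rule sum.UNION_disjoint[OF J fin1(2)]) (use dj in simp)
  have r: "sum G (f j ` X) = sum (G \<circ> f j) X" if "j \<in> J" for j X
    using inj that by (simp add: sum.reindex inj_on_def inj_def)
  show "Diff G (\<Union>j\<in>J. f j ` A j) (\<Union>j\<in>J. f j ` A' j) = (\<Sum>j\<in>J. Diff (G \<circ> f j) (A j) (A' j))"
    unfolding Diff_def e1 e2 s1 s2 by (simp add: r sum_subtractf)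
  show "fd (\<Union>j\<in>J. f j ` A j) (\<Union>j\<in>J. f j ` A' j)"
    unfolding fd_def e1 e2 using J fin1 by auto
qed


lemma Diff1_lessThan: "Diff (\<lambda>_. 1) {..<a} {..<b} = a - b"
proof (cases "b \<le> a")
  case True
  hence "{..<a} - {..<b} = {b..<a}" "{..<b} - {..<a} = {}" by auto
  thus ?thesis using True by (simp add: Diff_def)
next
  case False
  hence "{..<b} - {..<a} = {a..<b}" "{..<a} - {..<b} = {}" by auto
  thus ?thesis using False by (simp add: Diff_def)
qed

lemma fd_lessThan: "fd {..<a} {..<(b::int)}"
proof -
  have "{..<a} - {..<b} \<subseteq> {b..<a}" "{..<b} - {..<a} \<subseteq> {a..<b}" by auto
  thus ?thesis unfolding fd_def by (meson finite_atLeastLessThan_int finite_subset)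
qed

lemma Diff_Un_same:
  assumes "P \<inter> T = {}" "Q \<inter> T = {}"
  shows "Diff G (P \<union> T) (Q \<union> T) = Diff G P Q" "fd (P \<union> T) (Q \<union> T) = fd P Q"
proof -
  have "(P \<union> T) - (Q \<union> T) = P - Q" "(Q \<union> T) - (P \<union> T) = Q - P" using assms by auto
  thus "Diff G (P \<union> T) (Q \<union> T) = Diff G P Q" "fd (P \<union> T) (Q \<union> T) = fd P Q"
    by (simp_all add: Diff_def fd_def)
qed

section \<open>Partitions\<close>

definition bx :: "int \<Rightarrow> nat list \<Rightarrow> nat \<Rightarrow> int" where
  "bx s la i = int (part la i) - int i + s"

lemma part_mono:
  assumes "is_partition la" "1 \<le> i" "i \<le> j"
  shows "part la j \<le> part la i"
proof (cases "j \<le> length la")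
  case True
  have "sorted_wrt (\<ge>) la" using assms(1) by (simp add: is_partition_def)
  hence "la ! (j - 1) \<le> la ! (i - 1)"
    using assms True by (cases "i = j") (auto simp: sorted_wrt_iff_nth_less)
  thus ?thesis using assms True by (simp add: part_def)
next
  case False
  thus ?thesis by (simp add: part_def)
qed

lemma part_pos:
  assumes "is_partition la" "1 \<le> i" "i \<le> length la"
  shows "part la i \<ge> 1"
proof -
  have "la ! (i - 1) \<in> set la" using assms by auto
  hence "la ! (i - 1) \<noteq> 0" using assms(1) by (metis is_partition_def)
  thus ?thesis using assms by (simp add: part_def)
qed

lemma part_zero: "i > length la \<Longrightarrow> part la i = 0" by (simp add: part_def)

lemma bx_strict:
  assumes "is_partition la" "1 \<le> i" "i < j"
  shows "bx s la j < bx s la i"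
  using part_mono[OF assms(1,2), of j] assms(3) by (simp add: bx_def)

lemma bx_ge: "bx s la i \<ge> s - int i" by (simp add: bx_def)

lemma beta_set_bx: "beta_set s la = bx s la ` {i. 1 \<le> i}"
  by (auto simp: beta_set_def bx_def)

lemma beta_set_repr:
  assumes "is_partition la"
  shows "beta_set s la = bx s la ` {1..length la} \<union> {..< s - int (length la)}"
proof
  show "beta_set s la \<subseteq> bx s la ` {1..length la} \<union> {..< s - int (length la)}"
  proof
    fix y assume "y \<in> beta_set s la"
    then obtain i where i: "1 \<le> i" "y = bx s la i" by (auto simp: beta_set_bx)
    show "y \<in> bx s la ` {1..length la} \<union> {..< s - int (length la)}"
    proof (cases "i \<le> length la")
      case True thus ?thesis using i by auto
    next
      case False thus ?thesis using i by (auto simp: bx_def part_def)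
    qed
  qed
  show "bx s la ` {1..length la} \<union> {..< s - int (length la)} \<subseteq> beta_set s la"
  proof
    fix y assume y: "y \<in> bx s la ` {1..length la} \<union> {..< s - int (length la)}"
    show "y \<in> beta_set s la"
    proof (cases "y < s - int (length la)")
      case True
      define i where "i = nat (s - y)"
      have "i > length la" "int i = s - y" using True by (auto simp: i_def)
      hence "bx s la i = y" by (simp add: bx_def part_def)
      thus ?thesis using \<open>i > length la\<close> by (auto simp: beta_set_bx)
    next
      case False thus ?thesis using y by (auto simp: beta_set_bx)
    qed
  qed
qed

lemma lessThan_repr:
  "{..<s} = (\<lambda>i. s - int i) ` {1..M} \<union> {..< s - int M}"
proof -
  have *: "y \<in> (\<lambda>i. s - int i) ` {1..M}" if "s - int M \<le> y" "y < s" for y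
    using that by (intro image_eqI[where x="nat (s - y)"]) auto
  show ?thesis
  proof (rule set_eqI)
    fix y show "y \<in> {..<s} \<longleftrightarrow> y \<in> (\<lambda>i. s - int i) ` {1..M} \<union> {..< s - int M}"
      using *[of y] by (cases "y < s - int M") auto
  qed
qed

lemma Diff_beta_set:
  assumes "is_partition la"
  shows "Diff G (beta_set s la) {..<s} = (\<Sum>i=1..length la. G (bx s la i) - G (s - int i))"
    and "fd (beta_set s la) {..<s}"
proof -
  let ?M = "length la"
  have d1: "bx s la ` {1..?M} \<inter> {..< s - int ?M} = {}"
  proof -
    have "bx s la i \<ge> s - int ?M" if "i \<in> {1..?M}" for i using bx_ge[where s=s and la=la and i=i] that by auto
    thus ?thesis by force
  qed
  have d2: "(\<lambda>i. s - int i) ` {1..?M} \<inter> {..< s - int ?M} = {}" by auto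
  have inj1: "inj_on (bx s la) {1..?M}"
    by (rule inj_onI) (metis atLeastAtMost_iff bx_strict[OF assms] linorder_neqE_nat less_irrefl)
  have inj2: "inj_on (\<lambda>i. s - int i) {1..?M}" by (auto simp: inj_on_def)
  have "Diff G (beta_set s la) {..<s} = Diff G (bx s la ` {1..?M}) ((\<lambda>i. s - int i) ` {1..?M})"
    unfolding beta_set_repr[OF assms] by (subst lessThan_repr[of s ?M]) (rule Diff_Un_same(1)[OF d1 d2])
  also have "\<dots> = sum G (bx s la ` {1..?M}) - sum G ((\<lambda>i. s - int i) ` {1..?M})"
    by (rule Diff_fin) auto
  also have "\<dots> = (\<Sum>i=1..?M. G (bx s la i) - G (s - int i))"
    by (simp only: sum.reindex[OF inj1] sum.reindex[OF inj2] sum_subtractf comp_def)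
  finally show "Diff G (beta_set s la) {..<s} = (\<Sum>i=1..length la. G (bx s la i) - G (s - int i))" .
  have "fd (bx s la ` {1..?M}) ((\<lambda>i. s - int i) ` {1..?M})" by (simp add: fd_def)
  thus "fd (beta_set s la) {..<s}"
    unfolding beta_set_repr[OF assms] by (subst lessThan_repr[of s ?M]) (simp only: Diff_Un_same(2)[OF d1 d2])
qed

lemma sum_list_part: "(\<Sum>i=1..length la. part la i) = sum_list la"
proof -
  have "(\<Sum>i=1..length la. part la i) = (\<Sum>i<length la. la ! i)"
    by (rule sum.reindex_bij_witness[where i="\<lambda>i. i + 1" and j="\<lambda>i. i - 1"]) (auto simp: part_def)
  thus ?thesis by (simp add: sum_list_sum_nth atLeast0LessThan)
qed

lemma size_Diff:
  assumes "is_partition la"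
  shows "Diff (\<lambda>b. b) (beta_set s la) {..<s} = int (sum_list la)"
  unfolding Diff_beta_set(1)[OF assms] bx_def
  by (simp add: sum_list_part[symmetric])

lemma charge_Diff:
  assumes "is_partition la"
  shows "Diff (\<lambda>b. 1) (beta_set s la) {..<s} = 0"
  unfolding Diff_beta_set(1)[OF assms] by simp

lemma div_step:
  assumes "(e::int) > 0" shows "(x+1) div e = x div e + (if (x+1) mod e = 0 then 1 else 0)"
proof -
  have r: "0 \<le> x mod e" "x mod e < e" using assms by auto
  have eq: "x + 1 = (x mod e + 1) + (x div e) * e" by simp
  show ?thesis
  proof (cases "x mod e + 1 = e")
    case True
    then have "x + 1 = (x div e + 1) * e" using eq by (simp add: algebra_simps)
    thus ?thesis using assms by simp
  next
    case False
    hence lt: "x mod e + 1 < e" using r by auto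
    have "(x+1) div e = ((x mod e + 1) + e * (x div e)) div e" using eq by (simp add: mult.commute)
    also have "\<dots> = x div e + (x mod e + 1) div e" using assms by (rule div_mult_self2[OF order.strict_implies_not_eq[symmetric]])
    finally have "(x+1) div e = (x mod e + 1) div e + x div e" by simp
    moreover have "(x mod e + 1) div e = 0" using lt r by simp
    moreover have m: "(x+1) mod e = x mod e + 1"
    proof -
    have "(x+1) mod e = ((x mod e + 1) + e * (x div e)) mod e" using eq by (simp add: mult.commute)
    also have "\<dots> = (x mod e + 1) mod e" by (rule mod_mult_self2)
    also have "\<dots> = x mod e + 1" using lt r by simp
    finally show "(x+1) mod e = x mod e + 1" .
    qed
    ultimately show ?thesis using r by simp
  qed
qed

lemma mod_sub_iff:
  assumes "(e::int) > 0" "0 \<le> j" "j < e" shows "((y - j) mod e = 0) = (y mod e = j)"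
  using assms by (smt (verit, ccfv_SIG) mod_diff_eq mod_pos_pos_trivial)

definition F :: "nat \<Rightarrow> int \<Rightarrow> int \<Rightarrow> int" where
  "F e j b = (b - j) div int e"

lemma cnt_mod:
  assumes e: "e > 0" and j: "0 \<le> j" "j < int e"
  shows "int (card {b \<in> {1..n}. (c + int b) mod int e = j}) = F e j (c + int n) - F e j c"
proof (induction n)
  case 0 thus ?case by simp
next
  case (Suc n)
  let ?P = "\<lambda>b. (c + int b) mod int e = j"
  have set: "{b \<in> {1..Suc n}. ?P b} = {b \<in> {1..n}. ?P b} \<union> (if ?P (Suc n) then {Suc n} else {})"
    by (auto simp: le_Suc_eq)
  have card: "card {b \<in> {1..Suc n}. ?P b} = card {b \<in> {1..n}. ?P b} + (if ?P (Suc n) then 1 else 0)"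
    unfolding set by (auto simp: card_insert_if)
  have "F e j (c + int (Suc n)) = F e j (c + int n) + (if (c + int n - j + 1) mod int e = 0 then 1 else 0)"
    using div_step[of "int e" "c + int n - j"] e by (simp add: F_def algebra_simps)
  moreover have "((c + int n - j + 1) mod int e = 0) = ?P (Suc n)"
    using mod_sub_iff[of "int e" j "c + int n + 1"] e j by (simp add: algebra_simps)
  ultimately show ?case using Suc card by simp
qed

lemma count_image_mset_set:
  "finite N \<Longrightarrow> count (image_mset f (mset_set N)) j = card {x \<in> N. f x = j}"
  by (simp add: count_image_mset Int_def conj_commute)

lemma nodes_Sigma:
  assumes "is_partition la"
  shows "{x \<in> nodes la. P x} = Sigma {1..length la} (\<lambda>a. {b \<in> {1..part la a}. P (a, b)})"
proof -
  have "a \<le> length la" if "1 \<le> b" "b \<le> part la a" for a b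
    using that by (cases "a \<le> length la") (auto simp: part_def)
  thus ?thesis by (auto simp: nodes_def)
qed

lemma count_res1:
  assumes e: "e > 0" and j: "0 \<le> j" "j < int e" and la: "is_partition la"
  shows "int (count (res1 e (la, s)) j) = Diff (F e j) (beta_set s la) {..<s}"
proof -
  let ?M = "length la"
  have fin: "finite (nodes la)"
    using nodes_Sigma[OF la, of "\<lambda>_. True"] by simp
  have "count (res1 e (la, s)) j = card {x \<in> nodes la. (\<lambda>(a, b). (s + int b - int a) mod int e) x = j}"
    unfolding res1_def by (simp add: count_image_mset_set[OF fin])
  also have "\<dots> = card (Sigma {1..?M} (\<lambda>a. {b \<in> {1..part la a}. (s + int b - int a) mod int e = j}))"
    by (subst nodes_Sigma[OF la]) simp
  also have "\<dots> = (\<Sum>a=1..?M. card {b \<in> {1..part la a}. (s - int a + int b) mod int e = j})"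
    by (simp add: algebra_simps)
  finally have "int (count (res1 e (la, s)) j) = (\<Sum>a=1..?M. int (card {b \<in> {1..part la a}. (s - int a + int b) mod int e = j}))"
    by simp
  also have "\<dots> = (\<Sum>a=1..?M. F e j (bx s la a) - F e j (s - int a))"
    by (rule sum.cong[OF refl], subst cnt_mod[OF e j], simp add: bx_def algebra_simps)
  also have "\<dots> = Diff (F e j) (beta_set s la) {..<s}"
    by (simp add: Diff_beta_set(1)[OF la])
  finally show ?thesis .
qed

lemma res1_range:
  assumes "e > 0"
  shows "set_mset (res1 e x) \<subseteq> {0..<int e}"
  using assms by (auto simp: res1_def)


section \<open>Beta sets\<close>

definition isbeta :: "int set \<Rightarrow> bool" where
  "isbeta B \<longleftrightarrow> fd B {..<0}"

lemma isbeta_fd: "isbeta B \<Longrightarrow> fd B {..<s}"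
  unfolding isbeta_def using fd_trans fd_lessThan by blast

lemma beta_set_isbeta: "is_partition la \<Longrightarrow> isbeta (beta_set s la)"
  unfolding isbeta_def using Diff_beta_set(2) fd_trans fd_lessThan by blast

lemma charge_unique:
  assumes "is_partition la" "is_partition la'" "beta_set s la = beta_set s' la'"
  shows "s = s'"
proof -
  have "Diff (\<lambda>_. 1) {..<s} {..<s'} = Diff (\<lambda>_. 1) {..<s} (beta_set s la) + Diff (\<lambda>_. 1) (beta_set s la) {..<s'}"
    by (rule Diff_trans) (use Diff_beta_set(2) assms fd_sym in metis)+
  also have "\<dots> = 0"
    using charge_Diff[OF assms(1), of s] charge_Diff[OF assms(2), of s'] assms(3)
    by (simp add: Diff_swap[of _ "{..<s}"])
  finally show ?thesis by (simp add: Diff1_lessThan)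
qed

lemma dec_less: "(\<forall>n. f (Suc n) < (f n :: int)) \<Longrightarrow> m < n \<Longrightarrow> f n < f m"
proof (induction n)
  case 0 thus ?case by simp
next
  case (Suc n) thus ?case by (metis less_Suc_eq order.strict_trans)
qed

lemma dec_range_eq:
  fixes f g :: "nat \<Rightarrow> int"
  assumes f: "\<forall>n. f (Suc n) < f n" and g: "\<forall>n. g (Suc n) < g n" and r: "range f = range g"
  shows "f = g"
proof
  fix n show "f n = g n"
  proof (induction n rule: less_induct)
    case (less n)
    obtain k where k: "f n = g k" using r by (metis rangeE rangeI)
    obtain k' where k': "g n = f k'" using r by (metis rangeE rangeI)
    have "\<not> k < n"
    proof
      assume "k < n" hence "g k = f k" using less by simp
      hence "f n = f k" using k by simp
      thus False using dec_less[OF f \<open>k < n\<close>] by simp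
    qed
    hence "g k \<le> g n" using dec_less[OF g] by (cases "k = n") (auto simp: not_less order.order_iff_strict)
    have "\<not> k' < n"
    proof
      assume "k' < n" hence "g k' = f k'" using less by simp
      hence "g n = g k'" using k' by simp
      thus False using dec_less[OF g \<open>k' < n\<close>] by simp
    qed
    hence "f k' \<le> f n" using dec_less[OF f] by (cases "k' = n") (auto simp: not_less order.order_iff_strict)
    show ?case using k k' \<open>g k \<le> g n\<close> \<open>f k' \<le> f n\<close> by simp
  qed
qed

lemma partition_eqI:
  assumes la: "is_partition la" and la': "is_partition la'" and p: "\<forall>i\<ge>1. part la i = part la' i"
  shows "la = la'"
proof -
  have l1: "\<not> length la < length la'"
  proof
    assume a: "length la < length la'"
    have "part la' (length la') \<ge> 1" using part_pos[OF la'] a by simp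
    moreover have "part la (length la') = 0" using a by (simp add: part_def)
    moreover have "part la (length la') = part la' (length la')" using p a by simp
    ultimately show False by simp
  qed
  have l2: "\<not> length la' < length la"
  proof
    assume a: "length la' < length la"
    have "part la (length la) \<ge> 1" using part_pos[OF la] a by simp
    moreover have "part la' (length la) = 0" using a by (simp add: part_def)
    moreover have "part la (length la) = part la' (length la)" using p a by simp
    ultimately show False by simp
  qed
  have len: "length la = length la'" using l1 l2 by simp
  show ?thesis
  proof (rule nth_equalityI[OF len])
    fix i assume "i < length la"
    thus "la ! i = la' ! i" using p[rule_format, of "Suc i"] len by (simp add: part_def)
  qed
qed

lemma beta_set_inj:
  assumes la: "is_partition la" and la': "is_partition la'" and eq: "beta_set s la = beta_set s' la'"
  shows "s = s' \<and> la = la'"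
proof -
  have s: "s = s'" by (rule charge_unique[OF la la' eq])
  define f where "f n = bx s la (Suc n)" for n
  define g where "g n = bx s la' (Suc n)" for n
  have rf: "range f = beta_set s la" unfolding f_def beta_set_bx
    by (auto simp: image_iff) (metis Suc_le_D)
  have rg: "range g = beta_set s la'" unfolding g_def beta_set_bx
    by (auto simp: image_iff) (metis Suc_le_D)
  have "range f = range g" using rf rg eq s by simp
  have "f = g"
    by (rule dec_range_eq[OF _ _ \<open>range f = range g\<close>]) (simp_all add: f_def g_def bx_strict[OF la] bx_strict[OF la'])
  have "\<forall>i\<ge>1. part la i = part la' i"
  proof (intro allI impI)
    fix i :: nat assume "1 \<le> i"
    hence "Suc (i - 1) = i" by simp
    moreover have "f (i - 1) = g (i - 1)" using \<open>f = g\<close> by simp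
    ultimately have "bx s la i = bx s la' i" by (simp add: f_def g_def)
    thus "part la i = part la' i" by (simp add: bx_def)
  qed
  thus ?thesis using s partition_eqI[OF la la'] by simp
qed

lemma strict_dec_list:
  fixes bs :: "int list"
  assumes "sorted_wrt (>) bs" "i + d < length bs"
  shows "bs ! (i + d) + int d \<le> bs ! i"
  using assms(2)
proof (induction d)
  case 0 thus ?case by simp
next
  case (Suc d)
  have "bs ! (i + Suc d) < bs ! (i + d)"
    using assms(1) Suc.prems by (simp add: sorted_wrt_iff_nth_less)
  thus ?case using Suc by simp
qed

lemma beta_exists:
  assumes B: "isbeta B"
  shows "\<exists>la s. is_partition la \<and> beta_set s la = B"
proof -
  have f1: "finite ({..<0} - B)" and f2: "finite (B - {..<0})" using B by (auto simp: isbeta_def fd_def)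
  obtain L where L: "\<forall>b<L. b \<in> B"
  proof
    let ?L = "if {..<0} - B = {} then 0 else min 0 (Min ({..<(0::int)} - B))"
    show "\<forall>b<?L. b \<in> B"
    proof (intro allI impI)
      fix b assume "b < ?L"
      thus "b \<in> B" using f1 by (cases "{..<0} - B = {}") (auto dest: Min_le[OF f1])
    qed
  qed
  obtain U where U: "\<forall>b\<in>B. b < U"
  proof
    let ?U = "if B - {..<0} = {} then 0 else max 0 (Max (B - {..<(0::int)}) + 1)"
    show "\<forall>b\<in>B. b < ?U"
    proof
      fix b assume "b \<in> B"
      show "b < ?U"
      proof (cases "b < 0")
        case True thus ?thesis by auto
      next
        case False
        hence "b \<in> B - {..<0}" using \<open>b \<in> B\<close> by auto
        hence "b \<le> Max (B - {..<0})" "B - {..<0} \<noteq> {}" using Max_ge[OF f2] by auto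
        thus ?thesis by auto
      qed
    qed
  qed
  have "U \<le> L + int (nat (U - L))" by simp
  hence "L + int (nat (U - L)) \<notin> B" using U by fastforce
  hence ex: "\<exists>n. L + int n \<notin> B" by blast
  define n0 where "n0 = (LEAST n. L + int n \<notin> B)"
  define L0 where "L0 = L + int n0"
  have L0: "L0 \<notin> B" unfolding L0_def n0_def using LeastI_ex[OF ex] .
  have belowL0: "\<forall>b<L0. b \<in> B"
  proof (intro allI impI)
    fix b assume b: "b < L0"
    show "b \<in> B"
    proof (cases "b < L")
      case True thus ?thesis using L by simp
    next
      case False
      hence "nat (b - L) < n0" "b = L + int (nat (b - L))" using b by (auto simp: L0_def)
      have "\<not> (L + int (nat (b - L)) \<notin> B)"
        using not_less_Least[of "nat (b - L)" "\<lambda>n. L + int n \<notin> B"] \<open>nat (b - L) < n0\<close> n0_def by blast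
      thus ?thesis using \<open>b = L + int (nat (b - L))\<close> by simp
    qed
  qed
  define FF where "FF = B \<inter> {L0<..}"
  have finF: "finite FF" using U by (intro finite_subset[of FF "{L0<..<U}"]) (auto simp: FF_def)
  have BF: "B = FF \<union> {..<L0}" using belowL0 L0 by (auto simp: FF_def) (metis order.not_eq_order_implies_strict not_less)
  define m where "m = card FF"
  define bs where "bs = rev (sorted_list_of_set FF)"
  define s where "s = L0 + int m"
  have lbs: "length bs = m" by (simp add: bs_def m_def)
  have sbs: "set bs = FF" using finF by (simp add: bs_def)
  have dbs: "sorted_wrt (>) bs" unfolding bs_def sorted_wrt_rev
    using strict_sorted_list_of_set[of FF] by (simp add: sorted_wrt_rev)
  have lowb: "bs ! i \<ge> L0 + 1 + int (m - 1 - i)" if "i < m" for i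
  proof -
    have "m - 1 < length bs" using that lbs by simp
    hence "bs ! (m - 1) \<in> FF" using sbs nth_mem[of "m - 1" bs] by simp
    hence "bs ! (m - 1) \<ge> L0 + 1" by (auto simp: FF_def)
    moreover have "bs ! (i + (m - 1 - i)) + int (m - 1 - i) \<le> bs ! i"
      by (rule strict_dec_list[OF dbs]) (use that lbs in simp)
    ultimately show ?thesis using that by simp
  qed
  define la where "la = map (\<lambda>i. nat (bs ! i + int i + 1 - s)) [0..<m]"
  have lla: "length la = m" by (simp add: la_def)
  have lai: "int (la ! i) = bs ! i + int i + 1 - s" "la ! i \<ge> 1" if "i < m" for i
    using lowb[OF that] that by (auto simp: la_def s_def)
  have part: "is_partition la"
    unfolding is_partition_def
  proof
    show "sorted_wrt (\<ge>) la"
    proof (subst sorted_wrt_iff_nth_less, intro allI impI)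
      fix i j assume ij: "i < j" "j < length la"
      have "bs ! (i + (j - i)) + int (j - i) \<le> bs ! i"
        by (rule strict_dec_list[OF dbs]) (use ij lla lbs in simp)
      hence "int (la ! j) \<le> int (la ! i)" using lai ij lla by simp
      thus "la ! j \<le> la ! i" by simp
    qed
    show "0 \<notin> set la"
    proof
      assume "0 \<in> set la"
      then obtain i where "i < length la" "la ! i = 0" by (auto simp: in_set_conv_nth)
      thus False using lai(2)[of i] lla by simp
    qed
  qed
  have "bx s la ` {1..length la} = set bs"
  proof -
    have "bx s la (Suc i) = bs ! i" if "i < m" for i
      using lai[OF that] that lla by (simp add: bx_def part_def)
    moreover have "{1..m} = Suc ` {..<m}" by (simp add: image_Suc_lessThan)
    ultimately have "bx s la ` {1..m} = (\<lambda>i. bs ! i) ` {..<m}"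
      by (simp add: image_image)
    thus ?thesis using lla lbs by (auto simp: set_conv_nth image_def)
  qed
  hence "beta_set s la = B" using BF sbs lla by (simp add: beta_set_repr[OF part] s_def)
  thus ?thesis using part by blast
qed

lemma beta_ex1: "isbeta B \<Longrightarrow> \<exists>!x. x \<in> abacus \<and> beta_set (snd x) (fst x) = B"
proof -
  assume "isbeta B"
  then obtain la s where "is_partition la" "beta_set s la = B" using beta_exists by blast
  hence ex: "(la, s) \<in> abacus \<and> beta_set (snd (la, s)) (fst (la, s)) = B" by (simp add: abacus_def)
  show ?thesis
  proof (rule ex1I[where a="(la, s)"])
    show "(la, s) \<in> abacus \<and> beta_set (snd (la, s)) (fst (la, s)) = B" using ex .
    fix y assume "y \<in> abacus \<and> beta_set (snd y) (fst y) = B"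
    thus "y = (la, s)" using beta_set_inj ex by (cases y) (auto simp: abacus_def)
  qed
qed

lemma beta_inv:
  assumes "isbeta B"
  shows "beta_inv B \<in> abacus" "beta_set (snd (beta_inv B)) (fst (beta_inv B)) = B"
  using theI'[OF beta_ex1[OF assms]] unfolding beta_inv_def by auto

lemma beta_inv_eq:
  assumes "x \<in> abacus"
  shows "beta_inv (beta_set (snd x) (fst x)) = x"
proof -
  have "isbeta (beta_set (snd x) (fst x))" using assms beta_set_isbeta by (auto simp: abacus_def)
  thus ?thesis unfolding beta_inv_def using assms by (intro the1_equality beta_ex1) auto
qed

lemma abacus_part: "x \<in> abacus \<Longrightarrow> is_partition (fst x)" by (simp add: abacus_def)


section \<open>Uglov's map: basic arithmetic\<close>

lemma mult_small_zero:
  fixes a r :: int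
  assumes "r > 0" "\<bar>a * r\<bar> < r" shows "a = 0"
proof (rule ccontr)
  assume "a \<noteq> 0"
  hence "\<bar>a\<bar> \<ge> 1" by simp
  hence "\<bar>a\<bar> * r \<ge> 1 * r" using assms(1) by (intro mult_right_mono) auto
  thus False using assms by (simp add: abs_mult)
qed

lemma psi_div_mod:
  assumes "e > 0"
  shows "psi e r k b div int e = (b div int e + 1) * int r - int k"
    and "psi e r k b mod int e = b mod int e"
proof -
  have m: "0 \<le> b mod int e" "b mod int e < int e" using assms by auto
  have "psi e r k b = b mod int e + int e * ((b div int e + 1) * int r - int k)"
    by (simp add: psi_def algebra_simps)
  thus "psi e r k b div int e = (b div int e + 1) * int r - int k"
    "psi e r k b mod int e = b mod int e" using m assms by simp_all
qed

lemma psi_alt: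
  "psi e r k b = b + int e * ((int r - 1) * (b div int e) + (int r - int k))"
proof -
  define q where "q = b div int e"
  define m where "m = b mod int e"
  have "psi e r k b = ((q + 1) * int r - int k) * int e + m" unfolding psi_def q_def m_def ..
  also have "\<dots> = (int e * q + m) + int e * ((int r - 1) * q + (int r - int k))" by (simp add: algebra_simps)
  also have "\<dots> = b + int e * ((int r - 1) * (b div int e) + (int r - int k))" unfolding q_def m_def by simp
  finally show ?thesis .
qed

lemma psi_inj:
  assumes "e > 0" "r > 0" shows "inj (psi e r k)"
proof (rule injI)
  fix x y assume eq: "psi e r k x = psi e r k y"
  have "(x div int e + 1) * int r - int k = (y div int e + 1) * int r - int k"
    using psi_div_mod(1)[OF assms(1), of r k x] psi_div_mod(1)[OF assms(1), of r k y] eq by metis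
  hence "x div int e = y div int e" using assms(2) by simp
  moreover have "x mod int e = y mod int e"
    using psi_div_mod(2)[OF assms(1), of r k x] psi_div_mod(2)[OF assms(1), of r k y] eq by simp
  ultimately show "x = y" by (metis div_mult_mod_eq)
qed

lemma psi_disj:
  assumes "e > 0" "r > 0" "1 \<le> k" "k \<le> r" "1 \<le> k'" "k' \<le> r" "k \<noteq> k'"
  shows "range (psi e r k) \<inter> range (psi e r k') = {}"
proof (rule ccontr)
  assume "range (psi e r k) \<inter> range (psi e r k') \<noteq> {}"
  then obtain x y where eq: "psi e r k x = psi e r k' y" by auto
  have "(x div int e + 1) * int r - int k = (y div int e + 1) * int r - int k'"
    using psi_div_mod(1)[OF assms(1), of r k x] psi_div_mod(1)[OF assms(1), of r k' y] eq by simp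
  hence "(x div int e - y div int e) * int r = int k - int k'" by (simp add: algebra_simps)
  moreover have "\<bar>int k - int k'\<bar> < int r" using assms by auto
  ultimately have "\<bar>(x div int e - y div int e) * int r\<bar> < int r" by simp
  hence "x div int e - y div int e = 0" using mult_small_zero[of "int r" "x div int e - y div int e"] assms(2) by linarith
  thus False using \<open>(x div int e - y div int e) * int r = int k - int k'\<close> assms(7) by simp
qed

lemma qk_neg:
  fixes q r k :: int
  assumes "r > 0" "1 \<le> k" "k \<le> r"
  shows "((q + 1) * r - k < 0) = (q < 0)"
proof (cases "q < 0")
  case True
  hence "(q + 1) * r \<le> 0" using assms by (intro mult_nonpos_nonneg) auto
  thus ?thesis using True assms by simp
next
  case False
  hence "(q + 1) * r \<ge> 1 * r" using assms by (intro mult_right_mono) auto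
  thus ?thesis using False assms by linarith
qed

lemma psi_neg:
  assumes "e > 0" "r > 0" "1 \<le> k" "k \<le> r"
  shows "(psi e r k b < 0) = (b < 0)"
proof -
  have "(psi e r k b < 0) = (psi e r k b div int e < 0)" using assms(1) by (simp add: pos_imp_zdiv_neg_iff)
  also have "\<dots> = (b div int e < 0)" unfolding psi_div_mod(1)[OF assms(1)] by (rule qk_neg) (use assms in auto)
  also have "\<dots> = (b < 0)" using assms(1) by (simp add: pos_imp_zdiv_neg_iff)
  finally show ?thesis .
qed

lemma psi_surj:
  assumes "e > 0" "r > 0"
  shows "\<exists>k y. 1 \<le> k \<and> k \<le> r \<and> psi e r k y = x"
proof -
  define A where "A = x div int e"
  define k where "k = nat (int r - A mod int r)"
  define y where "y = (A div int r) * int e + x mod int e"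
  have m: "0 \<le> A mod int r" "A mod int r < int r" using assms by auto
  have k: "int k = int r - A mod int r" using m by (simp add: k_def)
  have ydiv: "y div int e = A div int r" and ymod: "y mod int e = x mod int e"
    using assms(1) by (simp_all add: y_def)
  have "(y div int e + 1) * int r - int k = A"
  proof -
    have "A = A div int r * int r + A mod int r" by simp
    thus ?thesis unfolding ydiv k by (simp add: algebra_simps)
  qed
  hence "psi e r k y = A * int e + x mod int e" by (simp add: psi_def ymod)
  also have "\<dots> = x" by (simp add: A_def)
  finally show ?thesis using k m by (intro exI[of _ k] exI[of _ y]) auto
qed

definition PB :: "nat \<Rightarrow> nat \<Rightarrow> (nat list \<times> int) list \<Rightarrow> int set" where
  "PB e r c = (\<Union>j<length c. psi e r (Suc j) ` beta_set (snd (c ! j)) (fst (c ! j)))"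

definition PE :: "nat \<Rightarrow> nat \<Rightarrow> (nat list \<times> int) list \<Rightarrow> int set" where
  "PE e r c = (\<Union>j<length c. psi e r (Suc j) ` {..< snd (c ! j)})"

lemma Psi_PB: "Psi e r c = beta_inv (PB e r c)" by (simp add: Psi_def PB_def)

lemma psi_family:
  assumes "e > 0" "r > 0" "length c = r"
  shows "\<forall>j\<in>{..<length c}. inj (psi e r (Suc j))"
    and "\<forall>j\<in>{..<length c}. \<forall>j'\<in>{..<length c}. j \<noteq> j' \<longrightarrow> range (psi e r (Suc j)) \<inter> range (psi e r (Suc j')) = {}"
  using assms psi_inj psi_disj by auto

lemma UN_psi_neg:
  assumes "e > 0" "r > 0"
  shows "(\<Union>j<r. psi e r (Suc j) ` {..<0}) = {..<0}"
proof
  show "(\<Union>j<r. psi e r (Suc j) ` {..<0}) \<subseteq> {..<0}" using psi_neg[OF assms] by auto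
  show "{..<0} \<subseteq> (\<Union>j<r. psi e r (Suc j) ` {..<0})"
  proof
    fix x :: int assume x: "x \<in> {..<0}"
    obtain k y where ky: "1 \<le> k" "k \<le> r" "psi e r k y = x" using psi_surj[OF assms] by blast
    have "y < 0" using psi_neg[OF assms ky(1,2), of y] ky(3) x by simp
    moreover have "k = Suc (k - 1)" "k - 1 < r" using ky by auto
    ultimately have "x \<in> psi e r (Suc (k - 1)) ` {..<0}" using ky(3) by auto
    thus "x \<in> (\<Union>j<r. psi e r (Suc j) ` {..<0})" using \<open>k - 1 < r\<close> by blast
  qed
qed

lemma multi_part: "c \<in> abacus_multi r \<Longrightarrow> j < r \<Longrightarrow> is_partition (fst (c ! j))"
  by (auto simp: abacus_multi_def)

lemma multi_len: "c \<in> abacus_multi r \<Longrightarrow> length c = r"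
  by (auto simp: abacus_multi_def)

lemma PB_PE:
  assumes "e > 0" "r > 0" "c \<in> abacus_multi r"
  shows "Diff G (PB e r c) (PE e r c) = (\<Sum>j<r. Diff (G \<circ> psi e r (Suc j)) (beta_set (snd (c ! j)) (fst (c ! j))) {..< snd (c ! j)})"
    and "fd (PB e r c) (PE e r c)"
proof -
  have l: "length c = r" using multi_len[OF assms(3)] .
  have fdj: "\<forall>j\<in>{..<length c}. fd (beta_set (snd (c ! j)) (fst (c ! j))) {..< snd (c ! j)}"
    using Diff_beta_set(2) multi_part[OF assms(3)] l by auto
  show "Diff G (PB e r c) (PE e r c) = (\<Sum>j<r. Diff (G \<circ> psi e r (Suc j)) (beta_set (snd (c ! j)) (fst (c ! j))) {..< snd (c ! j)})"
    unfolding PB_def PE_def using Diff_UN(1)[OF _ psi_family[OF assms(1,2) l] fdj] l by simp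
  show "fd (PB e r c) (PE e r c)"
    unfolding PB_def PE_def using Diff_UN(2)[OF _ psi_family[OF assms(1,2) l] fdj] l by simp
qed

lemma PE_fd:
  assumes "e > 0" "r > 0" "length c = r"
  shows "fd (PE e r c) {..<0}"
proof -
  have fdj: "\<forall>j\<in>{..<length c}. fd {..< snd (c ! j)} {..<0}" using fd_lessThan by auto
  have "fd (PE e r c) (\<Union>j<length c. psi e r (Suc j) ` {..<0})"
    unfolding PE_def using Diff_UN(2)[OF _ psi_family[OF assms] fdj] by simp
  thus ?thesis using UN_psi_neg[OF assms(1,2)] assms(3) by simp
qed

lemma PB_isbeta:
  assumes "e > 0" "r > 0" "c \<in> abacus_multi r"
  shows "isbeta (PB e r c)"
  unfolding isbeta_def using PB_PE(2)[OF assms] PE_fd[OF assms(1,2) multi_len[OF assms(3)]] fd_trans by blast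


lemma Psi_beta:
  assumes "e > 0" "r > 0" "c \<in> abacus_multi r"
  shows "Psi e r c \<in> abacus" "beta_set (snd (Psi e r c)) (fst (Psi e r c)) = PB e r c"
  using beta_inv[OF PB_isbeta[OF assms]] by (simp_all add: Psi_PB)

lemma vimage_PB:
  assumes "e > 0" "r > 0" "length c = r" "j < r"
  shows "psi e r (Suc j) -` PB e r c = beta_set (snd (c ! j)) (fst (c ! j))"
proof
  show "beta_set (snd (c ! j)) (fst (c ! j)) \<subseteq> psi e r (Suc j) -` PB e r c"
    using assms by (auto simp: PB_def)
  show "psi e r (Suc j) -` PB e r c \<subseteq> beta_set (snd (c ! j)) (fst (c ! j))"
  proof
    fix y assume "y \<in> psi e r (Suc j) -` PB e r c"
    then obtain j' z where j': "j' < r" "z \<in> beta_set (snd (c ! j')) (fst (c ! j'))" "psi e r (Suc j) y = psi e r (Suc j') z"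
      using assms(3) by (auto simp: PB_def)
    have "j' = j"
    proof (rule ccontr)
      assume "j' \<noteq> j"
      hence "range (psi e r (Suc j)) \<inter> range (psi e r (Suc j')) = {}"
        using psi_disj[OF assms(1,2)] j'(1) assms(4) by simp
      thus False using j'(3) by (metis disjoint_iff rangeI)
    qed
    hence "y = z" using j'(3) psi_inj[OF assms(1,2)] by (auto simp: inj_def)
    thus "y \<in> beta_set (snd (c ! j)) (fst (c ! j))" using j' \<open>j' = j\<close> by simp
  qed
qed

lemma Psi_inj:
  assumes "e > 0" "r > 0"
  shows "inj_on (Psi e r) (abacus_multi r)"
proof (rule inj_onI)
  fix c d assume c: "c \<in> abacus_multi r" and d: "d \<in> abacus_multi r" and eq: "Psi e r c = Psi e r d"
  have PB: "PB e r c = PB e r d" using Psi_beta(2)[OF assms c] Psi_beta(2)[OF assms d] eq by simp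
  show "c = d"
  proof (rule nth_equalityI)
    show "length c = length d" using multi_len[OF c] multi_len[OF d] by simp
    fix j assume "j < length c"
    hence j: "j < r" using multi_len[OF c] by simp
    have "beta_set (snd (c ! j)) (fst (c ! j)) = beta_set (snd (d ! j)) (fst (d ! j))"
      using vimage_PB[OF assms multi_len[OF c] j] vimage_PB[OF assms multi_len[OF d] j] PB by simp
    hence "snd (c ! j) = snd (d ! j) \<and> fst (c ! j) = fst (d ! j)"
      using beta_set_inj multi_part[OF c j] multi_part[OF d j] by blast
    thus "c ! j = d ! j" by (simp add: prod_eq_iff)
  qed
qed

lemma Psi_surj:
  assumes "e > 0" "r > 0" "x \<in> abacus"
  shows "\<exists>c\<in>abacus_multi r. Psi e r c = x"
proof -
  define B where "B = beta_set (snd x) (fst x)"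
  have B: "isbeta B" using beta_set_isbeta abacus_part[OF assms(3)] by (simp add: B_def)
  define P where "P j = psi e r (Suc j) -` B" for j
  have Pb: "isbeta (P j)" if "j < r" for j
  proof -
    have inj: "inj (psi e r (Suc j))" using psi_inj[OF assms(1,2)] .
    have neg: "\<And>y. (psi e r (Suc j) y < 0) = (y < 0)" using psi_neg[OF assms(1,2)] that by simp
    have "P j - {..<0} \<subseteq> psi e r (Suc j) -` (B - {..<0})" using neg by (auto simp: P_def)
    moreover have "{..<0} - P j \<subseteq> psi e r (Suc j) -` ({..<0} - B)" using neg by (auto simp: P_def)
    moreover have "finite (B - {..<0})" "finite ({..<0} - B)" using B by (auto simp: isbeta_def fd_def)
    ultimately show ?thesis unfolding isbeta_def fd_def
      by (meson finite_subset finite_vimageI inj)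
  qed
  define c where "c = map (\<lambda>j. beta_inv (P j)) [0..<r]"
  have cj: "c ! j \<in> abacus" "beta_set (snd (c ! j)) (fst (c ! j)) = P j" if "j < r" for j
    using beta_inv[OF Pb[OF that]] that by (simp_all add: c_def)
  have cm: "c \<in> abacus_multi r"
    using cj(1) by (auto simp: abacus_multi_def c_def abacus_def)
  have "PB e r c = (\<Union>j<r. psi e r (Suc j) ` P j)" using cj by (simp add: PB_def c_def)
  also have "\<dots> = B"
  proof
    show "(\<Union>j<r. psi e r (Suc j) ` P j) \<subseteq> B" by (auto simp: P_def)
    show "B \<subseteq> (\<Union>j<r. psi e r (Suc j) ` P j)"
    proof
      fix z assume z: "z \<in> B"
      obtain k y where ky: "1 \<le> k" "k \<le> r" "psi e r k y = z" using psi_surj[OF assms(1,2)] by blast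
      have "k = Suc (k - 1)" "k - 1 < r" using ky by auto
      hence "z \<in> psi e r (Suc (k - 1)) ` P (k - 1)" using ky z by (auto simp: P_def image_iff)
      thus "z \<in> (\<Union>j<r. psi e r (Suc j) ` P j)" using \<open>k - 1 < r\<close> by blast
    qed
  qed
  finally have "Psi e r c = x" using beta_inv_eq[OF assms(3)] by (simp add: Psi_PB B_def)
  thus ?thesis using cm by blast
qed

lemma Phi_Psi: "e > 0 \<Longrightarrow> r > 0 \<Longrightarrow> c \<in> abacus_multi r \<Longrightarrow> Phi e r (Psi e r c) = c"
  unfolding Phi_def by (rule inv_into_f_f[OF Psi_inj])

lemma Psi_image: "e > 0 \<Longrightarrow> r > 0 \<Longrightarrow> Psi e r ` abacus_multi r = abacus"
  using Psi_surj Psi_beta(1) by blast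

lemma Phi_in: "e > 0 \<Longrightarrow> r > 0 \<Longrightarrow> x \<in> abacus \<Longrightarrow> Phi e r x \<in> abacus_multi r"
  unfolding Phi_def by (rule inv_into_into) (simp add: Psi_image)

lemma Psi_Phi: "e > 0 \<Longrightarrow> r > 0 \<Longrightarrow> x \<in> abacus \<Longrightarrow> Psi e r (Phi e r x) = x"
  unfolding Phi_def by (rule f_inv_into_f) (simp add: Psi_image)


section \<open>Blocks are preserved by Psi\<close>

lemma Diff_psi_id:
  "Diff ((\<lambda>b. b) \<circ> psi e r k) X Y = Diff (\<lambda>b. b) X Y + (int e * (int r - 1)) * Diff (F e 0) X Y
     + (int e * (int r - int k)) * Diff (\<lambda>_. 1) X Y"
proof -
  have "(\<lambda>b. b) \<circ> psi e r k = (\<lambda>b. b + ((int e * (int r - 1)) * F e 0 b + (int e * (int r - int k)) * 1))"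
    by (rule ext) (simp add: psi_alt F_def algebra_simps)
  thus ?thesis by (simp only: Diff_add Diff_mult)
qed

lemma F_psi:
  assumes "e > 0"
  shows "F e j (psi e r k b) = F e j b + ((int r - 1) * F e 0 b + (int r - int k) * 1)"
proof -
  define T where "T = (int r - 1) * (b div int e) + (int r - int k)"
  have h: "psi e r k b - j = (b - j) + int e * T"
    by (simp add: psi_alt T_def)
  have "(psi e r k b - j) div int e = T + (b - j) div int e"
    unfolding h by (rule div_mult_self2) (use assms in simp)
  hence "(psi e r k b - j) div int e = (b - j) div int e + ((int r - 1) * (b div int e) + (int r - int k))"
    by (simp add: T_def)
  thus ?thesis by (simp add: F_def)
qed

lemma Diff_psi_F:
  assumes "e > 0"
  shows "Diff (F e j \<circ> psi e r k) X Y = Diff (F e j) X Y + (int r - 1) * Diff (F e 0) X Y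
     + (int r - int k) * Diff (\<lambda>_. 1) X Y"
proof -
  have "F e j \<circ> psi e r k = (\<lambda>b. F e j b + ((int r - 1) * F e 0 b + (int r - int k) * 1))"
    by (rule ext) (simp add: F_psi[OF assms])
  thus ?thesis by (simp only: Diff_add Diff_mult)
qed

lemma sizem_Diff:
  assumes "c \<in> abacus_multi r"
  shows "int (sizem c) = (\<Sum>j<r. Diff (\<lambda>b. b) (beta_set (snd (c ! j)) (fst (c ! j))) {..< snd (c ! j)})"
  using size_Diff multi_part[OF assms] multi_len[OF assms] by (simp add: sizem_def)

lemma resm_Diff:
  assumes "c \<in> abacus_multi r" "e > 0" "0 \<le> i" "i < int e"
  shows "int (count (resm e c) i) = (\<Sum>j<r. Diff (F e i) (beta_set (snd (c ! j)) (fst (c ! j))) {..< snd (c ! j)})"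
proof -
  have "int (count (resm e c) i) = (\<Sum>j<r. int (count (res1 e (fst (c ! j), snd (c ! j))) i))"
    using multi_len[OF assms(1)] by (simp add: resm_def count_sum)
  also have "\<dots> = (\<Sum>j<r. Diff (F e i) (beta_set (snd (c ! j)) (fst (c ! j))) {..< snd (c ! j)})"
    by (rule sum.cong[OF refl], rule count_res1[OF assms(2-4)], rule multi_part[OF assms(1)]) simp
  finally show ?thesis .
qed

lemma charge_sum_zero:
  assumes "c \<in> abacus_multi r"
  shows "(\<Sum>j<r. Diff (\<lambda>_. 1) (beta_set (snd (c ! j)) (fst (c ! j))) {..< snd (c ! j)}) = 0"
  using charge_Diff multi_part[OF assms] by simp

lemma PB_stat_1:
  assumes "e > 0" "r > 0" "c \<in> abacus_multi r"
  shows "Diff (\<lambda>_. 1) (PB e r c) (PE e r c) = 0"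
proof -
  have "((\<lambda>_. 1::int) \<circ> psi e r k) = (\<lambda>_. 1)" for k by auto
  thus ?thesis using PB_PE(1)[OF assms, of "\<lambda>_. 1"] charge_sum_zero[OF assms(3)] by simp
qed

lemma PB_stat_id:
  assumes "e > 0" "r > 0" "c \<in> abacus_multi r"
  shows "Diff (\<lambda>b. b) (PB e r c) (PE e r c) = int (sizem c) + (int e * (int r - 1)) * int (count (resm e c) 0)"
proof -
  have "Diff (\<lambda>b. b) (PB e r c) (PE e r c) = (\<Sum>j<r. Diff (\<lambda>b. b) (beta_set (snd (c ! j)) (fst (c ! j))) {..< snd (c ! j)}
     + (int e * (int r - 1)) * Diff (F e 0) (beta_set (snd (c ! j)) (fst (c ! j))) {..< snd (c ! j)})"
    unfolding PB_PE(1)[OF assms]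
    by (rule sum.cong[OF refl]) (simp add: Diff_psi_id charge_Diff multi_part[OF assms(3)])
  also have "\<dots> = int (sizem c) + (int e * (int r - 1)) * int (count (resm e c) 0)"
  proof -
    have r0: "int (count (resm e c) 0) = (\<Sum>j<r. Diff (F e 0) (beta_set (snd (c ! j)) (fst (c ! j))) {..< snd (c ! j)})"
      by (rule resm_Diff[OF assms(3,1)]) (use assms in auto)
    show ?thesis by (simp add: sum.distrib sum_distrib_left[symmetric] sizem_Diff[OF assms(3)] r0)
  qed
  finally show ?thesis .
qed

lemma PB_stat_F:
  assumes "e > 0" "r > 0" "c \<in> abacus_multi r" "0 \<le> i" "i < int e"
  shows "Diff (F e i) (PB e r c) (PE e r c) = int (count (resm e c) i) + (int r - 1) * int (count (resm e c) 0)"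
proof -
  have "Diff (F e i) (PB e r c) (PE e r c) = (\<Sum>j<r. Diff (F e i) (beta_set (snd (c ! j)) (fst (c ! j))) {..< snd (c ! j)}
     + (int r - 1) * Diff (F e 0) (beta_set (snd (c ! j)) (fst (c ! j))) {..< snd (c ! j)})"
    unfolding PB_PE(1)[OF assms(1-3)]
    by (rule sum.cong[OF refl]) (simp add: Diff_psi_F[OF assms(1)] charge_Diff multi_part[OF assms(3)])
  also have "\<dots> = int (count (resm e c) i) + (int r - 1) * int (count (resm e c) 0)"
  proof -
    have r0: "int (count (resm e c) 0) = (\<Sum>j<r. Diff (F e 0) (beta_set (snd (c ! j)) (fst (c ! j))) {..< snd (c ! j)})"
      by (rule resm_Diff[OF assms(3,1)]) (use assms in auto)
    have ri: "int (count (resm e c) i) = (\<Sum>j<r. Diff (F e i) (beta_set (snd (c ! j)) (fst (c ! j))) {..< snd (c ! j)})"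
      by (rule resm_Diff[OF assms(3,1,4,5)])
    show ?thesis by (simp add: sum.distrib sum_distrib_left[symmetric] r0 ri)
  qed
  finally show ?thesis .
qed

lemma PE_eq:
  assumes "map snd c = map snd d"
  shows "PE e r c = PE e r d"
proof -
  have l: "length c = length d" using arg_cong[OF assms, of length] by simp
  have "snd (c ! j) = snd (d ! j)" if "j < length c" for j
    using arg_cong[OF assms, of "\<lambda>xs. xs ! j"] that l by simp
  thus ?thesis unfolding PE_def using l by simp
qed

lemma Psi_block:
  assumes e: "e > 0" and r: "r > 0" and c: "c \<in> abacus_multi r" and d: "d \<in> abacus_multi r"
    and sb: "same_block e c d"
  shows "same_block1 e (Psi e r c) (Psi e r d)"
proof -
  define X where "X = Psi e r c"
  define Y where "Y = Psi e r d"
  define E where "E = PE e r c"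
  have "map snd c = map snd d" using sb by (simp add: same_block_def)
  hence E': "PE e r d = E" unfolding E_def by (rule PE_eq[symmetric])
  have bX: "beta_set (snd X) (fst X) = PB e r c" and bY: "beta_set (snd Y) (fst Y) = PB e r d"
    using Psi_beta[OF e r c] Psi_beta[OF e r d] by (simp_all add: X_def Y_def)
  have pX: "is_partition (fst X)" and pY: "is_partition (fst Y)"
    using Psi_beta[OF e r c] Psi_beta[OF e r d] abacus_part by (auto simp: X_def Y_def)
  have fX: "fd (PB e r c) {..<snd X}" using Diff_beta_set(2)[OF pX, of "snd X"] bX by simp
  have fY: "fd (PB e r d) {..<snd Y}" using Diff_beta_set(2)[OF pY, of "snd Y"] bY by simp
  have fXE: "fd (PB e r c) E" using PB_PE(2)[OF e r c] by (simp add: E_def)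
  have fYE: "fd (PB e r d) E" using PB_PE(2)[OF e r d] E' by simp
  have fEX: "fd E {..<snd X}" by (rule fd_trans[OF fd_sym[OF fXE] fX])
  have fEY: "fd E {..<snd Y}" by (rule fd_trans[OF fd_sym[OF fYE] fY])
  have decX: "Diff G (beta_set (snd X) (fst X)) {..<snd X} = Diff G (PB e r c) E + Diff G E {..<snd X}" for G
    unfolding bX by (rule Diff_trans[OF fXE fEX])
  have decY: "Diff G (beta_set (snd Y) (fst Y)) {..<snd Y} = Diff G (PB e r d) E + Diff G E {..<snd Y}" for G
    unfolding bY by (rule Diff_trans[OF fYE fEY])
  have "Diff (\<lambda>_. 1) E {..<snd X} = 0"
    using decX[of "\<lambda>_. 1"] charge_Diff[OF pX] PB_stat_1[OF e r c] by (simp add: E_def)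
  moreover have "Diff (\<lambda>_. 1) E {..<snd Y} = 0"
    using decY[of "\<lambda>_. 1"] charge_Diff[OF pY] PB_stat_1[OF e r d] E' by simp
  ultimately have "Diff (\<lambda>_. 1) {..<snd X} {..<snd Y} = 0"
    using Diff_trans[OF fd_sym[OF fEX] fEY, of "\<lambda>_. 1"] Diff_swap[of "\<lambda>_. 1" "{..<snd X}" E] by simp
  hence sXY: "snd X = snd Y" by (simp add: Diff1_lessThan)
  have same: "Diff G (beta_set (snd X) (fst X)) {..<snd X} = Diff G (beta_set (snd Y) (fst Y)) {..<snd Y}"
    if "Diff G (PB e r c) E = Diff G (PB e r d) E" for G
    using decX[of G] decY[of G] that sXY by simp
  have cnt: "count (resm e c) i = count (resm e d) i" for i using sb by (simp add: same_block_def)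
  have szm: "sizem c = sizem d" using sb by (simp add: same_block_def)
  have "Diff (\<lambda>b. b) (PB e r c) E = Diff (\<lambda>b. b) (PB e r d) E"
    using PB_stat_id[OF e r c] PB_stat_id[OF e r d] E' szm cnt[of 0] by (simp add: E_def)
  hence "int (sum_list (fst X)) = int (sum_list (fst Y))"
    using size_Diff[OF pX] size_Diff[OF pY] same[of "\<lambda>b. b"] by simp
  hence size: "sum_list (fst X) = sum_list (fst Y)" by simp
  have "count (res1 e X) i = count (res1 e Y) i" for i
  proof (cases "0 \<le> i \<and> i < int e")
    case True
    have "Diff (F e i) (PB e r c) E = Diff (F e i) (PB e r d) E"
      using PB_stat_F[OF e r c, of i] PB_stat_F[OF e r d, of i] E' True cnt[of 0] cnt[of i] by (simp add: E_def)
    hence "int (count (res1 e X) i) = int (count (res1 e Y) i)"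
      using count_res1[OF e _ _ pX, of i "snd X"] count_res1[OF e _ _ pY, of i "snd Y"] True
        same[of "F e i"] by simp
    thus ?thesis by simp
  next
    case False
    hence "i \<notin># res1 e X" "i \<notin># res1 e Y" using res1_range[OF e, of X] res1_range[OF e, of Y] by auto
    thus ?thesis by (simp add: not_in_iff)
  qed
  hence "res1 e X = res1 e Y" by (simp add: multiset_eqI)
  thus ?thesis using sXY size by (simp add: same_block1_def X_def Y_def)
qed


section \<open>Quotients (the map eta)\<close>

lemma qdiv: "b mod int e = i \<Longrightarrow> (b - i) div int e = b div int e"
  by (metis minus_mod_eq_mult_div mult.commute nonzero_mult_div_cancel_left div_by_0 mult_zero_left
      of_nat_eq_0_iff)

lemma quot_beta_diff: "quot_beta e X i - quot_beta e Y i \<subseteq> (\<lambda>b. (b - int i) div int e) ` (X - Y)"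
proof
  fix a assume "a \<in> quot_beta e X i - quot_beta e Y i"
  then obtain b where b: "b \<in> X" "b mod int e = int i" "a = (b - int i) div int e" and na: "a \<notin> quot_beta e Y i"
    by (auto simp: quot_beta_def)
  have "b \<notin> Y" using b na by (auto simp: quot_beta_def)
  thus "a \<in> (\<lambda>b. (b - int i) div int e) ` (X - Y)" using b by auto
qed

lemma quot_beta_fd: "fd X Y \<Longrightarrow> fd (quot_beta e X i) (quot_beta e Y i)"
  unfolding fd_def using quot_beta_diff by (meson finite_imageI finite_subset)

lemma quot_beta_neg:
  assumes "i < e"
  shows "quot_beta e {..<0} i = {..<0}"
proof
  have e: "int e > 0" using assms by simp
  show "quot_beta e {..<0} i \<subseteq> {..<0}"
  proof
    fix a assume "a \<in> quot_beta e {..<0} i"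
    then obtain b where "b < 0" "b mod int e = int i" "a = (b - int i) div int e" by (auto simp: quot_beta_def)
    thus "a \<in> {..<0}" using e by (simp add: qdiv pos_imp_zdiv_neg_iff)
  qed
  show "{..<0} \<subseteq> quot_beta e {..<0} i"
  proof
    fix a :: int assume a: "a \<in> {..<0}"
    have "(a + 1) * int e \<le> 0" using a by (intro mult_nonpos_nonneg) auto
    hence neg: "a * int e + int i < 0" using assms by (simp add: algebra_simps)
    have m: "(a * int e + int i) mod int e = int i" using assms by simp
    have d: "(a * int e + int i - int i) div int e = a" using assms by simp
    show "a \<in> quot_beta e {..<0} i" unfolding quot_beta_def
      using neg m d by (intro CollectI exI[of _ "a * int e + int i"]) auto
  qed
qed

lemma quot_isbeta: "isbeta X \<Longrightarrow> i < e \<Longrightarrow> isbeta (quot_beta e X i)"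
  unfolding isbeta_def using quot_beta_fd quot_beta_neg by metis

lemma psi1: "psi (Suc 0) r k a = (a + 1) * int r - int k"
  by (simp add: psi_def)

lemma quot_UN_psi:
  assumes "i < e" "r > 0"
  shows "quot_beta e (\<Union>j\<in>J. psi e r (Suc j) ` A j) i = (\<Union>j\<in>J. psi 1 r (Suc j) ` quot_beta e (A j) i)"
proof -
  have e: "e > 0" using assms by simp
  have key: "(psi e r k y mod int e = int i) = (y mod int e = int i)" for k y
    using psi_div_mod(2)[OF e] by simp
  have key2: "(psi e r k y - int i) div int e = psi 1 r k ((y - int i) div int e)" if "y mod int e = int i" for k y
  proof -
    have "psi e r k y mod int e = int i" using key that by simp
    hence "(psi e r k y - int i) div int e = psi e r k y div int e" by (rule qdiv)
    also have "\<dots> = (y div int e + 1) * int r - int k" by (rule psi_div_mod(1)[OF e])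
    also have "\<dots> = psi 1 r k ((y - int i) div int e)" using qdiv[OF that] by (simp add: psi1)
    finally show ?thesis .
  qed
  show ?thesis
  proof
    show "quot_beta e (\<Union>j\<in>J. psi e r (Suc j) ` A j) i \<subseteq> (\<Union>j\<in>J. psi 1 r (Suc j) ` quot_beta e (A j) i)"
    proof
      fix a assume "a \<in> quot_beta e (\<Union>j\<in>J. psi e r (Suc j) ` A j) i"
      then obtain j y where jy: "j \<in> J" "y \<in> A j" "psi e r (Suc j) y mod int e = int i"
        "a = (psi e r (Suc j) y - int i) div int e" by (auto simp: quot_beta_def)
      have ym: "y mod int e = int i" using jy(3) key by simp
      have "a = psi 1 r (Suc j) ((y - int i) div int e)" using jy(4) key2[OF ym] by simp
      moreover have "(y - int i) div int e \<in> quot_beta e (A j) i" using jy(2) ym by (auto simp: quot_beta_def)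
      ultimately show "a \<in> (\<Union>j\<in>J. psi 1 r (Suc j) ` quot_beta e (A j) i)" using jy(1) by blast
    qed
    show "(\<Union>j\<in>J. psi 1 r (Suc j) ` quot_beta e (A j) i) \<subseteq> quot_beta e (\<Union>j\<in>J. psi e r (Suc j) ` A j) i"
    proof
      fix a assume "a \<in> (\<Union>j\<in>J. psi 1 r (Suc j) ` quot_beta e (A j) i)"
      then obtain j y where jy: "j \<in> J" "y \<in> A j" "y mod int e = int i"
        "a = psi 1 r (Suc j) ((y - int i) div int e)" by (auto simp: quot_beta_def)
      have "a = (psi e r (Suc j) y - int i) div int e" using jy key2 by simp
      moreover have "psi e r (Suc j) y mod int e = int i" using jy(3) key by simp
      moreover have "psi e r (Suc j) y \<in> (\<Union>j\<in>J. psi e r (Suc j) ` A j)" using jy by blast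
      ultimately show "a \<in> quot_beta e (\<Union>j\<in>J. psi e r (Suc j) ` A j) i" unfolding quot_beta_def by blast
    qed
  qed
qed

definition cq :: "nat \<Rightarrow> (nat list \<times> int) list \<Rightarrow> nat \<Rightarrow> (nat list \<times> int) list" where
  "cq e c i = map (\<lambda>j. eta e (c ! j) i) [0..<length c]"

lemma eta_beta:
  assumes "x \<in> abacus" "i < e"
  shows "eta e x i \<in> abacus" "beta_set (snd (eta e x i)) (fst (eta e x i)) = quot_beta e (beta_set (snd x) (fst x)) i"
proof -
  have "isbeta (quot_beta e (beta_set (snd x) (fst x)) i)"
    using quot_isbeta beta_set_isbeta abacus_part[OF assms(1)] assms(2) by blast
  thus "eta e x i \<in> abacus" "beta_set (snd (eta e x i)) (fst (eta e x i)) = quot_beta e (beta_set (snd x) (fst x)) i"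
    using beta_inv by (simp_all add: eta_def)
qed

lemma multi_abacus: "c \<in> abacus_multi r \<Longrightarrow> j < r \<Longrightarrow> c ! j \<in> abacus"
  by (simp add: abacus_def multi_part)

lemma cq_multi:
  assumes "c \<in> abacus_multi r" "i < e"
  shows "cq e c i \<in> abacus_multi r"
  using eta_beta(1)[OF multi_abacus[OF assms(1)] assms(2)] multi_len[OF assms(1)]
  by (auto simp: cq_def abacus_multi_def abacus_def in_set_conv_nth)

lemma quot_PB:
  assumes "e > 0" "r > 0" "c \<in> abacus_multi r" "i < e"
  shows "quot_beta e (PB e r c) i = PB 1 r (cq e c i)"
proof -
  have l: "length c = r" using multi_len[OF assms(3)] .
  have "PB 1 r (cq e c i) = (\<Union>j<r. psi 1 r (Suc j) ` quot_beta e (beta_set (snd (c ! j)) (fst (c ! j))) i)"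
    unfolding PB_def cq_def using l eta_beta(2)[OF multi_abacus[OF assms(3)] assms(4)] by simp
  also have "\<dots> = quot_beta e (PB e r c) i"
    unfolding PB_def l by (rule quot_UN_psi[symmetric]) (use assms in auto)
  finally show ?thesis by simp
qed


section \<open>The Rouquier inequality\<close>

lemma part_le_sum: "is_partition la \<Longrightarrow> part la i \<le> sum_list la"
proof (cases "1 \<le> i \<and> i \<le> length la")
  case True
  hence "part la i \<le> (\<Sum>i=1..length la. part la i)"
    by (intro member_le_sum) auto
  thus ?thesis using sum_list_part[of la] by simp
next
  case False thus ?thesis by (auto simp: part_def)
qed

lemma bound_in:
  assumes la: "is_partition la" and T: "T \<in> beta_set s la"
  shows "T + 1 - s \<le> int (sum_list la)"
proof -
  obtain i where i: "1 \<le> i" "T = bx s la i" using T by (auto simp: beta_set_bx)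
  have "T + 1 - s \<le> int (part la i)" using i by (simp add: bx_def)
  thus ?thesis using part_le_sum[OF la, of i] by linarith
qed

lemma bound_notin:
  assumes la: "is_partition la" and T: "T \<notin> beta_set s la"
  shows "s - T \<le> int (sum_list la)"
proof (cases "T < s")
  case False thus ?thesis by simp
next
  case True
  define k where "k = nat (s - T)"
  have k: "1 \<le> k" "int k = s - T" using True by (auto simp: k_def)
  have "bx s la k \<in> beta_set s la" using k by (auto simp: beta_set_bx)
  hence "bx s la k \<noteq> T" using T by auto
  hence pk: "part la k \<ge> 1" using k by (simp add: bx_def)
  hence kl: "k \<le> length la" by (cases "k \<le> length la") (auto simp: part_def)
  have "(\<Sum>i=1..k. (1::nat)) \<le> (\<Sum>i=1..k. part la i)"
  proof (rule sum_mono)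
    fix x assume "x \<in> {1..k}"
    hence "part la k \<le> part la x" using part_mono[OF la, of x k] by simp
    thus "1 \<le> part la x" using pk by simp
  qed
  also have "\<dots> \<le> (\<Sum>i=1..length la. part la i)" by (rule sum_mono2) (use kl in auto)
  finally have "k \<le> sum_list la" using sum_list_part[of la] by simp
  thus ?thesis using k by simp
qed

lemma F1_0: "F (Suc 0) 0 = (\<lambda>b. b)" by (rule ext) (simp add: F_def)

lemma runner_decomp:
  assumes e: "e > 0" and r: "r > 0" and c: "c \<in> abacus_multi r" and i: "i < e"
  defines "g \<equiv> beta_inv (PE 1 r (cq e c i))"
  shows "g \<in> abacus" "beta_set (snd g) (fst g) = PE 1 r (cq e c i)"
    and "snd g = snd (eta e (Psi e r c) i)"
    and "int (sum_list (fst (eta e (Psi e r c) i))) = int r * int (sizem (cq e c i)) + int (sum_list (fst g))"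
proof -
  define c' where "c' = cq e c i"
  have c': "c' \<in> abacus_multi r" using cq_multi[OF c i] by (simp add: c'_def)
  have one: "(1::nat) > 0" by simp
  have Eb: "isbeta (PE 1 r c')" unfolding isbeta_def using PE_fd[OF one r multi_len[OF c']] .
  show gA: "g \<in> abacus" and gB: "beta_set (snd g) (fst g) = PE 1 r (cq e c i)"
    using beta_inv[OF Eb] by (simp_all add: g_def c'_def)
  define X where "X = Psi e r c"
  define \<rho> where "\<rho> = eta e X i"
  have XA: "X \<in> abacus" and XB: "beta_set (snd X) (fst X) = PB e r c" using Psi_beta[OF e r c] by (simp_all add: X_def)
  have \<rho>A: "\<rho> \<in> abacus" and \<rho>B: "beta_set (snd \<rho>) (fst \<rho>) = PB 1 r c'"
    using eta_beta[OF XA i] quot_PB[OF e r c i] XB by (simp_all add: \<rho>_def c'_def)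
  have p\<rho>: "is_partition (fst \<rho>)" and pg: "is_partition (fst g)" using \<rho>A gA abacus_part by auto
  let ?C = "PB 1 r c'" and ?E = "PE 1 r c'"
  have fCE: "fd ?C ?E" using PB_PE(2)[OF one r c'] .
  have fC: "fd ?C {..<snd \<rho>}" using Diff_beta_set(2)[OF p\<rho>, of "snd \<rho>"] \<rho>B by simp
  have fE: "fd ?E {..<snd g}" using Diff_beta_set(2)[OF pg, of "snd g"] gB by (simp add: c'_def)
  have fEC: "fd ?E {..<snd \<rho>}" by (rule fd_trans[OF fd_sym[OF fCE] fC])
  have "Diff (\<lambda>_. 1) ?C {..<snd \<rho>} = Diff (\<lambda>_. 1) ?C ?E + Diff (\<lambda>_. 1) ?E {..<snd \<rho>}"
    by (rule Diff_trans[OF fCE fEC])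
  hence z1: "Diff (\<lambda>_. 1) ?E {..<snd \<rho>} = 0"
    using charge_Diff[OF p\<rho>, of "snd \<rho>"] \<rho>B PB_stat_1[OF one r c'] by simp
  have z2: "Diff (\<lambda>_. 1) ?E {..<snd g} = 0" using charge_Diff[OF pg, of "snd g"] gB by (simp add: c'_def)
  have "Diff (\<lambda>_. 1) {..<snd g} {..<snd \<rho>} = Diff (\<lambda>_. 1) {..<snd g} ?E + Diff (\<lambda>_. 1) ?E {..<snd \<rho>}"
    by (rule Diff_trans[OF fd_sym[OF fE] fEC])
  hence "Diff (\<lambda>_. 1) {..<snd g} {..<snd \<rho>} = 0" using z1 z2 Diff_swap[of "\<lambda>_. 1" "{..<snd g}" ?E] by simp
  hence sg: "snd g = snd \<rho>" by (simp add: Diff1_lessThan)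
  thus "snd g = snd (eta e (Psi e r c) i)" by (simp add: \<rho>_def X_def)
  have "int (sum_list (fst \<rho>)) = Diff (\<lambda>b. b) ?C {..<snd \<rho>}" using size_Diff[OF p\<rho>, of "snd \<rho>"] \<rho>B by simp
  also have "\<dots> = Diff (\<lambda>b. b) ?C ?E + Diff (\<lambda>b. b) ?E {..<snd \<rho>}" by (rule Diff_trans[OF fCE fEC])
  also have "Diff (\<lambda>b. b) ?E {..<snd \<rho>} = int (sum_list (fst g))"
    using size_Diff[OF pg, of "snd g"] gB sg by (simp add: c'_def)
  also have "Diff (\<lambda>b. b) ?C ?E = int (sizem c') + (int 1 * (int r - 1)) * int (count (resm 1 c') 0)"
    by (rule PB_stat_id[OF one r c'])
  also have "int (count (resm 1 c') 0) = int (sizem c')"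
    using resm_Diff[OF c' one, of 0] sizem_Diff[OF c'] by (simp add: F1_0)
  finally show "int (sum_list (fst (eta e (Psi e r c) i))) = int r * int (sizem (cq e c i)) + int (sum_list (fst g))"
    by (simp add: \<rho>_def X_def c'_def algebra_simps)
qed

lemma mult_le_pred:
  fixes r z :: int
  assumes "r > 0" "r * z \<le> r - 1" shows "z \<le> 0"
proof (rule ccontr)
  assume "\<not> z \<le> 0" hence "z \<ge> 1" by simp
  hence "r * z \<ge> r * 1" using assms(1) by (intro mult_left_mono) auto
  thus False using assms by simp
qed

lemma rouquier_comp:
  assumes e: "e > 0" and r: "r > 0" and c: "c \<in> abacus_multi r"
    and rq: "r_rouquier e r (Psi e r c)" and j0: "j0 < r"
  shows "rouquier e (c ! j0)"
  unfolding rouquier_def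
proof (intro allI impI)
  fix i assume i: "i + 1 < e"
  define i1 where "i1 = Suc i"
  have ie: "i < e" "i1 < e" using i by (auto simp: i1_def)
  define X where "X = Psi e r c"
  define g where "g i' = beta_inv (PE 1 r (cq e c i'))" for i'
  define \<gamma> where "\<gamma> i' = int (sum_list (fst (g i')))" for i'
  define t where "t i' = snd (eta e X i')" for i'
  define U where "U i' = snd (eta e (c ! j0) i')" for i'
  define W where "W = weight e (c ! j0)"
  have l: "length c = r" using multi_len[OF c] .
  have cqj: "cq e c i' ! j0 = eta e (c ! j0) i'" for i' using j0 l by (simp add: cq_def)
  have lcq: "length (cq e c i') = r" for i' using l by (simp add: cq_def)
  note rd = runner_decomp[OF e r c, folded g_def X_def]
  have w: "int (weight e X) = (\<Sum>i'<e. int r * int (sizem (cq e c i')) + \<gamma> i')"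
    unfolding weight_def of_nat_sum by (rule sum.cong[OF refl]) (use rd(4) in \<open>simp add: \<gamma>_def\<close>)
  have "W \<le> (\<Sum>i'<e. sizem (cq e c i'))"
    unfolding W_def weight_def
  proof (rule sum_mono)
    fix i' assume "i' \<in> {..<e}"
    have "sum_list (fst (cq e c i' ! j0)) \<le> (\<Sum>k<r. sum_list (fst (cq e c i' ! k)))"
      by (rule member_le_sum) (use j0 in auto)
    thus "sum_list (fst (eta e (c ! j0) i')) \<le> sizem (cq e c i')" by (simp add: sizem_def lcq cqj)
  qed
  hence W1: "int r * int W \<le> (\<Sum>i'<e. int r * int (sizem (cq e c i')))"
    by (simp add: sum_distrib_left[symmetric] mult_left_mono of_nat_sum[symmetric] del: of_nat_sum)
  have "(\<Sum>i'\<in>{i, i1}. \<gamma> i') \<le> (\<Sum>i'<e. \<gamma> i')"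
    by (rule sum_mono2) (use ie in \<open>auto simp: \<gamma>_def\<close>)
  hence W2: "\<gamma> i + \<gamma> i1 \<le> (\<Sum>i'<e. \<gamma> i')" by (simp add: i1_def)
  have wlow: "int r * int W + \<gamma> i + \<gamma> i1 \<le> int (weight e X)"
    using W1 W2 unfolding w sum.distrib by simp
  have pg: "is_partition (fst (g i'))" if "i' < e" for i' using rd(1)[OF that] abacus_part by auto
  define T1 where "T1 = psi 1 r (Suc j0) (U i1)"
  define T2 where "T2 = psi 1 r (Suc j0) (U i - 1)"
  have one: "(1::nat) > 0" by simp
  have "T1 \<notin> PE 1 r (cq e c i1)"
  proof
    assume "T1 \<in> PE 1 r (cq e c i1)"
    then obtain j a where ja: "j < r" "a < snd (cq e c i1 ! j)" "psi 1 r (Suc j) a = T1"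
      unfolding PE_def by (auto simp: lcq)
    show False
    proof (cases "j = j0")
      case True
      hence "a = U i1" using ja(3) psi_inj[OF one r] by (auto simp: T1_def inj_def)
      thus False using ja(2) True by (simp add: cqj U_def)
    next
      case False
      hence "range (psi 1 r (Suc j)) \<inter> range (psi 1 r (Suc j0)) = {}"
        using psi_disj[OF one r] ja(1) j0 by simp
      thus False using ja(3) unfolding T1_def by (metis disjoint_iff rangeI)
    qed
  qed
  hence b1: "t i1 - T1 \<le> \<gamma> i1"
    using bound_notin[OF pg[OF ie(2)], of T1 "snd (g i1)"] rd(2)[OF ie(2)] rd(3)[OF ie(2)]
    by (simp add: \<gamma>_def t_def)
  have "U i - 1 \<in> {..< snd (cq e c i ! j0)}" by (simp add: cqj U_def)
  hence "T2 \<in> psi 1 r (Suc j0) ` {..< snd (cq e c i ! j0)}" unfolding T2_def by blast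
  hence "T2 \<in> PE 1 r (cq e c i)" unfolding PE_def using j0 lcq[of i] by auto
  hence b2: "T2 + 1 - t i \<le> \<gamma> i"
    using bound_in[OF pg[OF ie(1)], of T2 "snd (g i)"] rd(2)[OF ie(1)] rd(3)[OF ie(1)]
    by (simp add: \<gamma>_def t_def)
  have hyp: "int (weight e X) \<le> t i1 - t i + int r"
    using rq i unfolding r_rouquier_def by (simp add: X_def t_def i1_def)
  have "T1 = (U i1 + 1) * int r - int (Suc j0)" "T2 = U i * int r - int (Suc j0)"
    by (simp_all add: T1_def T2_def psi1 algebra_simps)
  hence "int r * int W + (t i1 - ((U i1 + 1) * int r - int (Suc j0))) + (U i * int r - int (Suc j0) + 1 - t i)
      \<le> t i1 - t i + int r"
    using wlow b1 b2 hyp by linarith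
  moreover have "int r * (int W - (U i1 - U i) - 1) = int r * int W - U i1 * int r + U i * int r - int r"
    by (simp add: algebra_simps)
  moreover have "(U i1 + 1) * int r = U i1 * int r + int r" by (simp add: algebra_simps)
  ultimately have "int r * (int W - (U i1 - U i) - 1) \<le> int r - 1" by linarith
  hence "int W - (U i1 - U i) - 1 \<le> 0" by (rule mult_le_pred[rotated]) (use r in simp)
  thus "int (weight e (c ! j0)) \<le> snd (eta e (c ! j0) (Suc i)) - snd (eta e (c ! j0) i) + 1"
    by (simp add: W_def U_def i1_def)
qed


lemma same_block_refl: "same_block e c c" by (simp add: same_block_def)
lemma same_block_sym: "same_block e c d \<Longrightarrow> same_block e d c" by (simp add: same_block_def)
lemma same_block_trans: "same_block e c d \<Longrightarrow> same_block e d f \<Longrightarrow> same_block e c f"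
  by (simp add: same_block_def)
lemma same_block1_trans: "same_block1 e x y \<Longrightarrow> same_block1 e y z \<Longrightarrow> same_block1 e x z"
  by (simp add: same_block1_def)

theorem corollary3p4:
  fixes e r :: nat and R :: "(nat list \<times> int) set"
  assumes "e \<ge> 2" and "r \<ge> 1"
    and "r_rouquier_block e r R"
  shows "\<exists>\<B>. \<B> \<subseteq> blocks_multi e r \<and> pairwise disjnt \<B> \<and>
             Phi e r ` R = \<Union>\<B> \<and> (\<forall>Bl\<in>\<B>. rouquier_block e r Bl)"
proof -
  have e: "e > 0" and r: "r > 0" using assms by auto
  obtain x0 where x0: "x0 \<in> abacus" and R: "R = {y \<in> abacus. same_block1 e x0 y}"
    using assms(3) by (auto simp: r_rouquier_block_def blocks1_def)
  have Rrq: "\<forall>x\<in>R. r_rouquier e r x" using assms(3) by (simp add: r_rouquier_block_def)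
  define blk where "blk c = {d \<in> abacus_multi r. same_block e c d}" for c
  define \<B> where "\<B> = blk ` (Phi e r ` R)"
  have RA: "x \<in> abacus" if "x \<in> R" for x using that R by simp
  have PhiA: "Phi e r x \<in> abacus_multi r" if "x \<in> R" for x using Phi_in[OF e r RA[OF that]] .
  have inR: "Psi e r d \<in> R" if x: "x \<in> R" and d: "d \<in> blk (Phi e r x)" for x d
  proof -
    have dA: "d \<in> abacus_multi r" and sb: "same_block e (Phi e r x) d" using d by (auto simp: blk_def)
    have "same_block1 e (Psi e r (Phi e r x)) (Psi e r d)" by (rule Psi_block[OF e r PhiA[OF x] dA sb])
    hence "same_block1 e x (Psi e r d)" using Psi_Phi[OF e r RA[OF x]] by simp
    moreover have "same_block1 e x0 x" using x R by simp
    ultimately have "same_block1 e x0 (Psi e r d)" using same_block1_trans by blast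
    thus ?thesis using Psi_beta(1)[OF e r dA] R by simp
  qed
  have sub: "\<B> \<subseteq> blocks_multi e r"
    unfolding \<B>_def blocks_multi_def blk_def using PhiA by blast
  have disj: "pairwise disjnt \<B>"
  proof (rule pairwiseI)
    fix A B assume A: "A \<in> \<B>" and B: "B \<in> \<B>" and ne: "A \<noteq> B"
    obtain c where c: "A = blk c" using A by (auto simp: \<B>_def)
    obtain c' where c': "B = blk c'" using B by (auto simp: \<B>_def)
    show "disjnt A B"
    proof (rule ccontr)
      assume "\<not> disjnt A B"
      then obtain d where "d \<in> blk c" "d \<in> blk c'" using c c' by (auto simp: disjnt_def)
      hence "same_block e c d" "same_block e c' d" by (auto simp: blk_def)
      hence "same_block e c f = same_block e c' f" for f
        using same_block_sym same_block_trans by metis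
      hence "blk c = blk c'" by (simp add: blk_def)
      thus False using ne c c' by simp
    qed
  qed
  have eq: "Phi e r ` R = \<Union>\<B>"
  proof
    show "Phi e r ` R \<subseteq> \<Union>\<B>"
    proof
      fix y assume "y \<in> Phi e r ` R"
      then obtain x where x: "x \<in> R" "y = Phi e r x" by auto
      have "y \<in> blk (Phi e r x)" using x PhiA[OF x(1)] same_block_refl by (simp add: blk_def)
      thus "y \<in> \<Union>\<B>" using x by (auto simp: \<B>_def)
    qed
    show "\<Union>\<B> \<subseteq> Phi e r ` R"
    proof
      fix d assume "d \<in> \<Union>\<B>"
      then obtain x where x: "x \<in> R" "d \<in> blk (Phi e r x)" by (auto simp: \<B>_def)
      have dA: "d \<in> abacus_multi r" using x by (simp add: blk_def)
      have "d = Phi e r (Psi e r d)" using Phi_Psi[OF e r dA] by simp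
      thus "d \<in> Phi e r ` R" using inR[OF x] by blast
    qed
  qed
  have rq: "\<forall>Bl\<in>\<B>. rouquier_block e r Bl"
  proof
    fix Bl assume Bl: "Bl \<in> \<B>"
    then obtain x where x: "x \<in> R" "Bl = blk (Phi e r x)" by (auto simp: \<B>_def)
    have "\<forall>d\<in>Bl. rouquier_multi e d"
    proof
      fix d assume d: "d \<in> Bl"
      have dA: "d \<in> abacus_multi r" using d x by (simp add: blk_def)
      have "r_rouquier e r (Psi e r d)" using Rrq inR[OF x(1)] d x(2) by simp
      thus "rouquier_multi e d"
        unfolding rouquier_multi_def using rouquier_comp[OF e r dA] multi_len[OF dA] by simp
    qed
    thus "rouquier_block e r Bl" using sub Bl by (auto simp: rouquier_block_def)
  qed
  show ?thesis using sub disj eq rq by blast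
qed

end
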